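(* Under Assumption 1, for every $\xi>0$ and every bounded set $S\subseteq\mathcal{Z}$ there exists $\alpha_\xi>0$ such that $G_\xi(z;z^\star)\ge\alpha_\xi\,\mathrm{dist}(z,\mathcal{Z}^\star)^2$ for all $z^\star\in\mathcal{Z}^\star$ and all $z\in S$. This holds both for the minimax problem (A) with $\mathcal{Z}=\mathbb{R}^{n\times m}_+\times\mathbb{R}^m$, and for the minimax problem (B) with $\mathcal{Z}=\mathbb{R}^{n\times m}_+\times\mathbb{R}^n_{>0}\times\mathbb{R}^m\times\mathbb{R}^n$.
   Context: Fisher market: $n$ buyers, $m$ goods, budgets $w_i>0$, utilities $u_{ij}\ge0$; Assumption 1: every row and column of $U=(u_{ij})$ has a positive entry. Problem (A): $\min_{x\ge0}\max_{p}\ \mathcal{L}(x,p)=-\sum_i w_i\log(\sum_j u_{ij}x_{ij})+\sum_j p_j(\sum_i x_{ij}-1)$, $z=(x,p)$. Problem (B): $\min_{x\ge0,t>0}\max_{p,y}\ \mathcal{L}(x,t;p,y)=-\sum_i w_i\log t_i+\sum_j p_j(\sum_i x_{ij}-1)+\sum_i y_i(t_i-\sum_j u_{ij}x_{ij})$, $z=((x,t),(p,y))$. For either problem, with primal part $\mathrm{pr}(z)$ and dual part $\mathrm{du}(z)$: $Q(z,\hat z)=\mathcal{L}(\mathrm{pr}(z),\mathrm{du}(\hat z))-\mathcal{L}(\mathrm{pr}(\hat z),\mathrm{du}(z))$; $G_\xi(z;\dot z)=\max_{\hat z\in\mathcal{Z}}\{Q(z,\hat z)-\frac\xi2\|\hat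 z-\dot z\|^2\}$; $\mathcal{Z}^\star$ is the set of saddle points. *)

theory Defs
  imports "HOL-Analysis.Analysis" "HOL-Library.Extended_Real"
begin

text \<open>Buyers are indexed by the finite type 'n, goods by the finite type 'm.
  Budgets w :: real^'n, utilities u :: real^'m^'n (u $ i $ j = u_ij),
  allocations x :: real^'m^'n (x $ i $ j = x_ij). All norms are Euclidean
  (the product / vector norms of HOL-Analysis).\<close>

definition util :: "real^'m^'n \<Rightarrow> real^'m^'n \<Rightarrow> 'n \<Rightarrow> real" where
  "util u x i = (\<Sum>j\<in>UNIV. u $ i $ j * x $ i $ j)"

definition LA :: "real^'n \<Rightarrow> real^'m^'n \<Rightarrow> real^'m^'n \<Rightarrow> real^'m \<Rightarrow> ereal" where
  "LA w u x p =
     (if (\<forall>i. util u x i > 0)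
      then ereal (- (\<Sum>i\<in>UNIV. w $ i * ln (util u x i))
                  + (\<Sum>j\<in>UNIV. p $ j * ((\<Sum>i\<in>UNIV. x $ i $ j) - 1)))
      else \<infinity>)"

definition ZA :: "((real^'m^'n) \<times> (real^'m)) set" where
  "ZA = {(x, p). \<forall>i j. x $ i $ j \<ge> 0}"

definition LB :: "real^'n \<Rightarrow> real^'m^'n \<Rightarrow> ((real^'m^'n) \<times> (real^'n)) \<Rightarrow> ((real^'m) \<times> (real^'n)) \<Rightarrow> ereal" where
  "LB w u xt py =
     ereal (- (\<Sum>i\<in>UNIV. w $ i * ln (snd xt $ i))
            + (\<Sum>j\<in>UNIV. fst py $ j * ((\<Sum>i\<in>UNIV. fst xt $ i $ j) - 1))
            + (\<Sum>i\<in>UNIV. snd py $ i * (snd xt $ i - util u (fst xt) i)))"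

definition ZB :: "(((real^'m^'n) \<times> (real^'n)) \<times> ((real^'m) \<times> (real^'n))) set" where
  "ZB = {((x, t), (p, y)). (\<forall>i j. x $ i $ j \<ge> 0) \<and> (\<forall>i. t $ i > 0)}"

definition Qgap :: "('a \<Rightarrow> 'b \<Rightarrow> ereal) \<Rightarrow> ('a \<times> 'b) \<Rightarrow> ('a \<times> 'b) \<Rightarrow> ereal" where
  "Qgap L z zh = L (fst z) (snd zh) - L (fst zh) (snd z)"

definition Gsm :: "('a::metric_space \<Rightarrow> 'b::metric_space \<Rightarrow> ereal) \<Rightarrow> ('a \<times> 'b) set \<Rightarrow> real
                    \<Rightarrow> ('a \<times> 'b) \<Rightarrow> ('a \<times> 'b) \<Rightarrow> ereal"
  where
  "Gsm L Z \<xi> z zd = (SUP zh\<in>Z. Qgap L z zh - ereal (\<xi> / 2 * (dist zh zd)\<^sup>2))"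

definition saddle_points :: "('a \<Rightarrow> 'b \<Rightarrow> ereal) \<Rightarrow> ('a \<times> 'b) set \<Rightarrow> ('a \<times> 'b) set" where
  "saddle_points L Z =
     {zs \<in> Z. \<forall>z\<in>Z. L (fst zs) (snd z) \<le> L (fst zs) (snd zs)
                   \<and> L (fst zs) (snd zs) \<le> L (fst z) (snd zs)}"

end

theory Submission
  imports Defs
begin


definition supp2 :: "real^'m^'n \<Rightarrow> ('n \<times> 'm) set" where
  "supp2 D = {(i,j). D$i$j \<noteq> 0}"

definition domi :: "real^'m^'n \<Rightarrow> real^'m^'n \<Rightarrow> bool" where
  "domi E D \<longleftrightarrow> (\<forall>i j. (0 \<le> E$i$j \<and> E$i$j \<le> D$i$j) \<or> (D$i$j \<le> E$i$j \<and> E$i$j \<le> 0))"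

definition conf :: "real^'m^'n \<Rightarrow> real^'m^'n \<Rightarrow> bool" where
  "conf E D \<longleftrightarrow> (\<forall>i j. (0 \<le> D$i$j \<longrightarrow> 0 \<le> E$i$j) \<and> (D$i$j \<le> 0 \<longrightarrow> E$i$j \<le> 0))"

lemma domi_refl: "domi D D" unfolding domi_def by auto

lemma domi_trans: "domi E D \<Longrightarrow> domi F E \<Longrightarrow> domi F D"
  unfolding domi_def by (meson order_trans)

lemma subspace_supp: "subspace {v::real^'m^'n. supp2 v \<subseteq> J}"
  unfolding subspace_def supp2_def
  apply (auto simp: subset_iff)
  by (metis add.right_neutral)

lemma closed_supp: "closed {v::real^'m^'n. supp2 v \<subseteq> J}"
  by (rule closed_subspace[OF subspace_supp])

lemma uniform_iso:
  fixes M :: "real^'m^'n \<Rightarrow> 'b::euclidean_space"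
  assumes "linear M"
  shows "\<exists>e>0. \<forall>J. (\<forall>v. supp2 v \<subseteq> J \<and> M v = 0 \<longrightarrow> v = 0) \<longrightarrow>
            (\<forall>v. supp2 v \<subseteq> J \<longrightarrow> e * norm v \<le> norm (M v))"
proof -
  have bl: "bounded_linear M" using assms linear_conv_bounded_linear by blast
  have "\<forall>J. \<exists>e>0. (\<forall>v. supp2 v \<subseteq> J \<and> M v = 0 \<longrightarrow> v = 0) \<longrightarrow>
            (\<forall>v. supp2 v \<subseteq> J \<longrightarrow> e * norm v \<le> norm (M v))"
  proof
    fix J :: "('n \<times> 'm) set"
    show "\<exists>e>0. (\<forall>v. supp2 v \<subseteq> J \<and> M v = 0 \<longrightarrow> v = 0) \<longrightarrow>
            (\<forall>v. supp2 v \<subseteq> J \<longrightarrow> e * norm v \<le> norm (M v))"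
    proof (cases "\<forall>v. supp2 v \<subseteq> J \<and> M v = 0 \<longrightarrow> v = 0")
      case True
      have "\<exists>e>0. \<forall>x\<in>{v. supp2 v \<subseteq> J}. norm (M x) \<ge> e * norm x"
        by (rule injective_imp_isometric[OF closed_supp subspace_supp bl]) (use True in auto)
      then obtain e where "e>0" "\<forall>x\<in>{v. supp2 v \<subseteq> J}. norm (M x) \<ge> e * norm x"
        by blast
      then show ?thesis by auto
    next
      case False then show ?thesis by (intro exI[of _ 1]) auto
    qed
  qed
  then obtain E where E: "\<And>J. E J > 0 \<and> ((\<forall>v. supp2 v \<subseteq> J \<and> M v = 0 \<longrightarrow> v = 0) \<longrightarrow>
            (\<forall>v. supp2 v \<subseteq> J \<longrightarrow> E J * norm v \<le> norm (M v)))" by metis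
  define e where "e = Min (range E)"
  have fin: "finite (range E)" by simp
  have epos: "e > 0" unfolding e_def using fin E by (subst Min_gr_iff) auto
  have "\<And>J. e \<le> E J" unfolding e_def using fin by auto
  then have "\<forall>J. (\<forall>v. supp2 v \<subseteq> J \<and> M v = 0 \<longrightarrow> v = 0) \<longrightarrow>
            (\<forall>v. supp2 v \<subseteq> J \<longrightarrow> e * norm v \<le> norm (M v))"
    using E by (meson mult_right_mono norm_ge_zero order_trans)
  with epos show ?thesis by blast
qed

lemma coord_step:
  fixes d k t :: real
  assumes t: "t > 0" and le: "k*d > 0 \<Longrightarrow> t \<le> d/k" and z: "d = 0 \<Longrightarrow> k = 0"
  shows "(0 \<le> d \<longrightarrow> 0 \<le> d - t*k) \<and> (d \<le> 0 \<longrightarrow> d - t*k \<le> 0) \<and>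
         (k*d \<ge> 0 \<longrightarrow> ((0 \<le> d-t*k \<and> d-t*k \<le> d) \<or> (d \<le> d-t*k \<and> d-t*k \<le> 0)))"
proof (cases "k > 0")
  case True
  show ?thesis
  proof (cases "d > 0")
    case True
    with \<open>k>0\<close> have "t \<le> d/k" using le by simp
    then have "t*k \<le> d" using \<open>k>0\<close> by (simp add: pos_le_divide_eq)
    then show ?thesis using \<open>k>0\<close> t True by (auto simp: mult_pos_pos)
  next
    case False
    then have "d < 0" using \<open>k>0\<close> z by force
    moreover have "t*k > 0" using \<open>k>0\<close> t by simp
    moreover have "k*d < 0" using \<open>k>0\<close> \<open>d<0\<close> by (simp add: mult_pos_neg)
    ultimately show ?thesis by auto
  qed
next
  case False
  show ?thesis
  proof (cases "k < 0")
    case True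
    show ?thesis
    proof (cases "d < 0")
      case True
      with \<open>k<0\<close> have "t \<le> d/k" using le by (simp add: mult_neg_neg)
      then have "d \<le> t*k" using \<open>k<0\<close> by (simp add: neg_le_divide_eq)
      moreover have "t*k < 0" using \<open>k<0\<close> t by (simp add: mult_pos_neg)
      ultimately show ?thesis using True by auto
    next
      case False
      then have "d > 0" using \<open>k<0\<close> z by force
      moreover have "t*k < 0" using \<open>k<0\<close> t by (simp add: mult_pos_neg)
      moreover have "k*d < 0" using \<open>k<0\<close> \<open>d>0\<close> by (simp add: mult_neg_pos)
      ultimately show ?thesis by auto
    qed
  next
    case False
    with \<open>\<not> k > 0\<close> have "k = 0" by simp
    then show ?thesis by auto
  qed
qed

lemma shrink:
  fixes D k :: "real^'m^'n" and M :: "real^'m^'n \<Rightarrow> 'b::euclidean_space"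
  assumes sk: "supp2 k \<subseteq> supp2 D" and pos: "k$i0$j0 * D$i0$j0 > 0" and lin: "linear M" and Mk: "M k = 0"
  shows "\<exists>t>0. conf (D - t *\<^sub>R k) D \<and> supp2 (D - t *\<^sub>R k) \<subset> supp2 D \<and> M (D - t *\<^sub>R k) = M D
     \<and> ((\<forall>i j. k$i$j * D$i$j \<ge> 0) \<longrightarrow> domi (D - t *\<^sub>R k) D)"
proof -
  define T where "T = {(i,j). k$i$j * D$i$j > 0}"
  define f where "f = (\<lambda>(i,j). D$i$j / k$i$j)"
  define t where "t = Min (f ` T)"
  have finT: "finite T" by simp
  have neT: "(i0,j0) \<in> T" using pos unfolding T_def by simp
  have tin: "t \<in> f ` T" unfolding t_def using finT neT by (intro Min_in) auto
  then obtain a b where ab: "(a,b) \<in> T" "t = D$a$b / k$a$b" unfolding f_def by auto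
  have tle: "\<And>i j. k$i$j * D$i$j > 0 \<Longrightarrow> t \<le> D$i$j / k$i$j"
  proof -
    fix i j assume "k$i$j * D$i$j > 0"
    then have "(i,j) \<in> T" unfolding T_def by simp
    then have "t \<le> f (i,j)" unfolding t_def using finT by (intro Min_le) auto
    then show "t \<le> D$i$j / k$i$j" unfolding f_def by simp
  qed
  have kab: "k$a$b * D$a$b > 0" using ab unfolding T_def by simp
  have tpos: "t > 0"
  proof -
    have "D$a$b / k$a$b = (k$a$b * D$a$b) / (k$a$b)^2" by (cases "k$a$b = 0") (auto simp: power2_eq_square)
    moreover have "k$a$b \<noteq> 0" using kab by auto
    ultimately show ?thesis using ab kab by simp
  qed
  have z: "\<And>i j. D$i$j = 0 \<Longrightarrow> k$i$j = 0" using sk unfolding supp2_def by auto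
  have cs: "\<And>i j. (0 \<le> D$i$j \<longrightarrow> 0 \<le> D$i$j - t*k$i$j) \<and> (D$i$j \<le> 0 \<longrightarrow> D$i$j - t*k$i$j \<le> 0) \<and>
         (k$i$j*D$i$j \<ge> 0 \<longrightarrow> ((0 \<le> D$i$j-t*k$i$j \<and> D$i$j-t*k$i$j \<le> D$i$j) \<or> (D$i$j \<le> D$i$j-t*k$i$j \<and> D$i$j-t*k$i$j \<le> 0)))"
    by (rule coord_step[OF tpos]) (auto intro: tle z)
  have E: "\<And>i j. (D - t *\<^sub>R k)$i$j = D$i$j - t*k$i$j" by simp
  have conf: "conf (D - t *\<^sub>R k) D" unfolding conf_def E using cs by blast
  have dom: "(\<forall>i j. k$i$j * D$i$j \<ge> 0) \<longrightarrow> domi (D - t *\<^sub>R k) D" unfolding domi_def E using cs by blast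
  have sub: "supp2 (D - t *\<^sub>R k) \<subseteq> supp2 D" unfolding supp2_def E using z by auto
  have "D$a$b - t * k$a$b = 0" using ab kab by (auto simp: field_simps)
  then have "(a,b) \<notin> supp2 (D - t *\<^sub>R k)" unfolding supp2_def E by simp
  moreover have "(a,b) \<in> supp2 D" using kab unfolding supp2_def by auto
  ultimately have psub: "supp2 (D - t *\<^sub>R k) \<subset> supp2 D" using sub by blast
  have "M (D - t *\<^sub>R k) = M D" using lin Mk by (simp add: linear_diff linear_scale)
  then show ?thesis using tpos conf psub dom by blast
qed

lemma hoffman_core:
  fixes M :: "real^'m^'n \<Rightarrow> 'b::euclidean_space"
  assumes lin: "linear M"
  shows "\<exists>H\<ge>0. \<forall>D. \<exists>D'. domi D' D \<and> M D' = M D \<and> norm D' \<le> H * norm (M D)"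
proof -
  obtain e where e: "e > 0" "\<And>J. (\<forall>v. supp2 v \<subseteq> J \<and> M v = 0 \<longrightarrow> v = 0) \<Longrightarrow>
            (\<forall>v. supp2 v \<subseteq> J \<longrightarrow> e * norm v \<le> norm (M v))"
    using uniform_iso[OF lin] by blast
  define H where "H = 1/e"
  have H0: "H \<ge> 0" using e by (simp add: H_def)
  have main: "\<exists>D'. domi D' D \<and> M D' = M D \<and> norm D' \<le> H * norm (M D)" for D
  proof (induction "card (supp2 D)" arbitrary: D rule: less_induct)
    case less
    show ?case
    proof (cases "\<forall>v. supp2 v \<subseteq> supp2 D \<and> M v = 0 \<longrightarrow> v = 0")
      case True
      then have "e * norm D \<le> norm (M D)" using e(2)[OF True] by blast
      then have "norm D \<le> H * norm (M D)" unfolding H_def using e(1) by (simp add: field_simps)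
      then show ?thesis using domi_refl by blast
    next
      case False
      then obtain k where k: "supp2 k \<subseteq> supp2 D" "M k = 0" "k \<noteq> 0" by blast
      then obtain i0 j0 where ij: "k$i0$j0 \<noteq> 0" by (metis vec_eq_iff zero_index)
      then have "D$i0$j0 \<noteq> 0" using k(1) unfolding supp2_def by auto
      define k' where "k' = (if k$i0$j0 * D$i0$j0 > 0 then k else -k)"
      have k'pos: "k'$i0$j0 * D$i0$j0 > 0" unfolding k'_def using ij \<open>D$i0$j0 \<noteq> 0\<close>
        by (auto simp: mult_less_0_iff zero_less_mult_iff)
      have Mk': "M k' = 0" unfolding k'_def using k lin by (simp add: linear_neg)
      have sk': "supp2 k' \<subseteq> supp2 D" unfolding k'_def using k(1) by (auto simp: supp2_def)
      obtain t1 where t1: "t1 > 0" "conf (D - t1 *\<^sub>R k') D" "supp2 (D - t1 *\<^sub>R k') \<subset> supp2 D"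
          "M (D - t1 *\<^sub>R k') = M D" "(\<forall>i j. k'$i$j * D$i$j \<ge> 0) \<longrightarrow> domi (D - t1 *\<^sub>R k') D"
        using shrink[OF sk' k'pos lin Mk'] by blast
      define E1 where "E1 = D - t1 *\<^sub>R k'"
      have cE1: "card (supp2 E1) < card (supp2 D)" unfolding E1_def using t1(3) by (simp add: psubset_card_mono)
      obtain E1' where E1': "domi E1' E1" "M E1' = M E1" "norm E1' \<le> H * norm (M E1)"
        using less(1)[OF cE1] by blast
      show ?thesis
      proof (cases "\<forall>i j. k'$i$j * D$i$j \<ge> 0")
        case True
        then have "domi E1 D" using t1(5) unfolding E1_def by blast
        then show ?thesis using E1' t1(4) domi_trans unfolding E1_def by metis
      next
        case False
        then obtain i1 j1 where "\<not> k'$i1$j1 * D$i1$j1 \<ge> 0" by blast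
        then have pos2: "(-k')$i1$j1 * D$i1$j1 > 0" by simp
        have Mk'': "M (-k') = 0" using Mk' lin by (simp add: linear_neg)
        have sk'': "supp2 (-k') \<subseteq> supp2 D" using sk' by (auto simp: supp2_def)
        obtain t2 where t2: "t2 > 0" "conf (D - t2 *\<^sub>R (-k')) D" "supp2 (D - t2 *\<^sub>R (-k')) \<subset> supp2 D"
          "M (D - t2 *\<^sub>R (-k')) = M D"
          using shrink[OF sk'' pos2 lin Mk''] by blast
        define E2 where "E2 = D - t2 *\<^sub>R (-k')"
        have cE2: "card (supp2 E2) < card (supp2 D)" unfolding E2_def using t2(3) by (simp add: psubset_card_mono)
        obtain E2' where E2': "domi E2' E2" "M E2' = M E2" "norm E2' \<le> H * norm (M E2)"
          using less(1)[OF cE2] by blast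
        define l where "l = t2 / (t1 + t2)"
        have l01: "0 \<le> l" "l \<le> 1" unfolding l_def using t1(1) t2(1) by auto
        have Dcomb: "D = l *\<^sub>R E1 + (1 - l) *\<^sub>R E2"
        proof -
          have "1 - l = t1 / (t1 + t2)" unfolding l_def using t1(1) t2(1) by (simp add: field_simps)
          then have "l * t1 = (1 - l) * t2" unfolding l_def by simp
          then have "\<And>a b. D$a$b = l * (D$a$b - t1 * k'$a$b) + (1-l) * (D$a$b + t2 * k'$a$b)"
            by (simp add: algebra_simps) (metis distrib_left mult.assoc mult.commute)
          then show ?thesis unfolding E1_def E2_def by (simp add: vec_eq_iff)
        qed
        define D' where "D' = l *\<^sub>R E1' + (1 - l) *\<^sub>R E2'"
        have "M D' = l *\<^sub>R M E1 + (1 - l) *\<^sub>R M E2" unfolding D'_def using lin E1'(2) E2'(2)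
          by (simp add: linear_add linear_scale)
        also have "\<dots> = M D" using t1(4) t2(4) unfolding E1_def E2_def by (simp add: scaleR_left_distrib[symmetric])
        finally have MD': "M D' = M D" .
        have "norm D' \<le> l * norm E1' + (1 - l) * norm E2'" unfolding D'_def using l01
          by (metis (no_types, opaque_lifting) abs_of_nonneg diff_ge_0_iff_ge norm_scaleR norm_triangle_ineq)
        also have "\<dots> \<le> l * (H * norm (M D)) + (1 - l) * (H * norm (M D))"
          using E1'(3) E2'(3) t1(4) t2(4) l01 unfolding E1_def E2_def
          by (intro add_mono mult_left_mono) auto
        also have "\<dots> = H * norm (M D)" by (simp add: algebra_simps)
        finally have nD': "norm D' \<le> H * norm (M D)" .
        have dD': "domi D' D"
          unfolding domi_def
        proof (intro allI)
          fix i j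
          have c1: "(0 \<le> D$i$j \<longrightarrow> 0 \<le> E1$i$j) \<and> (D$i$j \<le> 0 \<longrightarrow> E1$i$j \<le> 0)"
            using t1(2) unfolding conf_def E1_def by blast
          have c2: "(0 \<le> D$i$j \<longrightarrow> 0 \<le> E2$i$j) \<and> (D$i$j \<le> 0 \<longrightarrow> E2$i$j \<le> 0)"
            using t2(2) unfolding conf_def E2_def by blast
          have d1: "(0 \<le> E1'$i$j \<and> E1'$i$j \<le> E1$i$j) \<or> (E1$i$j \<le> E1'$i$j \<and> E1'$i$j \<le> 0)"
            using E1'(1) unfolding domi_def by blast
          have d2: "(0 \<le> E2'$i$j \<and> E2'$i$j \<le> E2$i$j) \<or> (E2$i$j \<le> E2'$i$j \<and> E2'$i$j \<le> 0)"
            using E2'(1) unfolding domi_def by blast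
          have Dij: "D$i$j = l * E1$i$j + (1-l) * E2$i$j" by (subst Dcomb) simp
          have D'ij: "D'$i$j = l * E1'$i$j + (1-l) * E2'$i$j" unfolding D'_def by simp
          show "(0 \<le> D'$i$j \<and> D'$i$j \<le> D$i$j) \<or> (D$i$j \<le> D'$i$j \<and> D'$i$j \<le> 0)"
            unfolding D'ij Dij
          proof (cases "0 \<le> D$i$j")
            case True
            then have "0 \<le> E1$i$j" "0 \<le> E2$i$j" using c1 c2 by auto
            then have "0 \<le> E1'$i$j \<and> E1'$i$j \<le> E1$i$j" "0 \<le> E2'$i$j \<and> E2'$i$j \<le> E2$i$j" using d1 d2 by auto
            then show "(0 \<le> l * E1'$i$j + (1-l) * E2'$i$j \<and> l * E1'$i$j + (1-l) * E2'$i$j \<le> l * E1$i$j + (1-l) * E2$i$j) \<or>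
                       (l * E1$i$j + (1-l) * E2$i$j \<le> l * E1'$i$j + (1-l) * E2'$i$j \<and> l * E1'$i$j + (1-l) * E2'$i$j \<le> 0)"
              using l01 by (intro disjI1) (auto intro!: add_mono mult_left_mono)
          next
            case False
            then have "E1$i$j \<le> 0" "E2$i$j \<le> 0" using c1 c2 by auto
            then have "E1$i$j \<le> E1'$i$j \<and> E1'$i$j \<le> 0" "E2$i$j \<le> E2'$i$j \<and> E2'$i$j \<le> 0" using d1 d2 by auto
            then show "(0 \<le> l * E1'$i$j + (1-l) * E2'$i$j \<and> l * E1'$i$j + (1-l) * E2'$i$j \<le> l * E1$i$j + (1-l) * E2$i$j) \<or>
                       (l * E1$i$j + (1-l) * E2$i$j \<le> l * E1'$i$j + (1-l) * E2'$i$j \<and> l * E1'$i$j + (1-l) * E2'$i$j \<le> 0)"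
              using l01 by (intro disjI2) (auto intro!: add_mono mult_left_mono add_nonpos_nonpos mult_nonneg_nonpos)
          qed
        qed
        show ?thesis using dD' MD' nD' by blast
      qed
    qed
  qed
  show ?thesis using H0 main by blast
qed



definition ee :: "'n \<Rightarrow> 'm \<Rightarrow> real^'m^'n" where
  "ee i j = (\<chi> a b. if a = i \<and> b = j then 1 else 0)"

lemma ee_nth[simp]: "ee i j $ a $ b = (if a = i \<and> b = j then 1 else 0)"
  unfolding ee_def by simp

lemma norm2_vec2: "(norm (x::real^'m^'n))^2 = (\<Sum>i\<in>UNIV. \<Sum>j\<in>UNIV. (x$i$j)^2)"
  by (simp only: power2_norm_eq_inner inner_vec_def inner_real_def) (simp add: power2_eq_square)

lemma norm2_vec: "(norm (x::real^'m))^2 = (\<Sum>j\<in>UNIV. (x$j)^2)"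
  by (simp only: power2_norm_eq_inner inner_vec_def inner_real_def) (simp add: power2_eq_square)

lemma norm_ee_scale: "norm (t *\<^sub>R ee i j :: real^'m^'n) = \<bar>t\<bar>"
proof -
  have "(norm (t *\<^sub>R ee i j :: real^'m^'n))^2 = (\<Sum>a\<in>UNIV. \<Sum>b\<in>UNIV. (if a = i \<and> b = j then t^2 else 0))"
    unfolding norm2_vec2 by (intro sum.cong refl) auto
  also have "\<dots> = (\<Sum>a\<in>UNIV. (if a = i then t^2 else 0))"
    by (intro sum.cong refl) (auto)
  also have "\<dots> = t^2" by simp
  finally have "(norm (t *\<^sub>R ee i j :: real^'m^'n))^2 = \<bar>t\<bar>^2" by simp
  then show ?thesis using norm_ge_zero abs_ge_zero power2_eq_iff_nonneg by blast
qed

lemma util_ee: "util u (x + t *\<^sub>R ee i j) k = util u x k + (if k = i then t * u$i$j else 0)"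
proof -
  have "util u (x + t *\<^sub>R ee i j) k = (\<Sum>b\<in>UNIV. u$k$b * x$k$b + (if k = i \<and> b = j then t * u$i$j else 0))"
    unfolding util_def by (intro sum.cong refl) (simp add: distrib_left)
  also have "\<dots> = util u x k + (\<Sum>b\<in>UNIV. (if k = i \<and> b = j then t * u$i$j else 0))"
    unfolding util_def sum.distrib by simp
  also have "(\<Sum>b\<in>UNIV. (if k = i \<and> b = j then t * u$i$j else 0)) = (if k = i then t * u$i$j else 0)"
    by (cases "k = i") auto
  finally show ?thesis .
qed

lemma colsum_ee: "(\<Sum>a\<in>UNIV. (x + t *\<^sub>R ee i j)$a$b) = (\<Sum>a\<in>UNIV. x$a$b) + (if b = j then t else 0)"
proof -
  have "(\<Sum>a\<in>UNIV. (x + t *\<^sub>R ee i j)$a$b) = (\<Sum>a\<in>UNIV. x$a$b + (if b = j \<and> a = i then t else 0))"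
    by (intro sum.cong refl) auto
  also have "\<dots> = (\<Sum>a\<in>UNIV. x$a$b) + (if b = j then t else 0)"
    unfolding sum.distrib by (cases "b = j") auto
  finally show ?thesis .
qed

definition fA :: "real^'n \<Rightarrow> real^'m^'n \<Rightarrow> real^'m^'n \<Rightarrow> real" where
  "fA w u x = - (\<Sum>i\<in>UNIV. w $ i * ln (util u x i))"

definition LAr :: "real^'n \<Rightarrow> real^'m^'n \<Rightarrow> real^'m^'n \<Rightarrow> real^'m \<Rightarrow> real" where
  "LAr w u x p = fA w u x + (\<Sum>j\<in>UNIV. p $ j * ((\<Sum>i\<in>UNIV. x $ i $ j) - 1))"

lemma LA_pos: "(\<forall>i. util u x i > 0) \<Longrightarrow> LA w u x p = ereal (LAr w u x p)"
  unfolding LA_def LAr_def fA_def by simp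

lemma LA_nonpos: "\<not>(\<forall>i. util u x i > 0) \<Longrightarrow> LA w u x p = \<infinity>"
  unfolding LA_def by simp

lemma fA_ee: "fA w u (x + t *\<^sub>R ee i j) = fA w u x - w$i * ln (util u x i + t * u$i$j) + w$i * ln (util u x i)"
proof -
  have "(\<Sum>k\<in>UNIV. w$k * ln (util u (x + t *\<^sub>R ee i j) k)) =
        (\<Sum>k\<in>UNIV. w$k * ln (util u x k) + (if k = i then w$i * ln (util u x i + t * u$i$j) - w$i * ln (util u x i) else 0))"
    unfolding util_ee by (intro sum.cong refl) auto
  also have "\<dots> = (\<Sum>k\<in>UNIV. w$k * ln (util u x k)) + (w$i * ln (util u x i + t * u$i$j) - w$i * ln (util u x i))"
    unfolding sum.distrib by simp
  finally show ?thesis unfolding fA_def by simp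
qed

lemma colterm_ee: "(\<Sum>b\<in>UNIV. p$b * ((\<Sum>a\<in>UNIV. (x + t *\<^sub>R ee i j)$a$b) - 1)) =
   (\<Sum>b\<in>UNIV. p$b * ((\<Sum>a\<in>UNIV. x$a$b) - 1)) + p$j * t"
proof -
  have "(\<Sum>b\<in>UNIV. p$b * ((\<Sum>a\<in>UNIV. (x + t *\<^sub>R ee i j)$a$b) - 1)) =
     (\<Sum>b\<in>UNIV. p$b * ((\<Sum>a\<in>UNIV. x$a$b) - 1) + (if b = j then p$j * t else 0))"
    unfolding colsum_ee by (intro sum.cong refl) (simp add: distrib_left right_diff_distrib)
  then show ?thesis unfolding sum.distrib by simp
qed

lemma LAr_ee: "LAr w u (x + t *\<^sub>R ee i j) p = LAr w u x p - w$i * ln (util u x i + t * u$i$j) + w$i * ln (util u x i) + p$j * t"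
  unfolding LAr_def fA_ee colterm_ee by simp

lemma ln_mid:
  fixes a b :: real assumes "a > 0" "b > 0"
  shows "- ln a - ln b + 2 * ln ((a+b)/2) \<ge> (a-b)^2/(a+b)^2"
proof -
  define r where "r = (a+b)/2"
  have r: "r > 0" using assms r_def by simp
  have q: "a*b/r^2 > 0" using assms r by simp
  have "ln (a*b/r^2) \<le> a*b/r^2 - 1" using q by (rule ln_le_minus_one)
  moreover have "ln (a*b/r^2) = ln a + ln b - 2 * ln r" using assms r
    by (simp add: ln_mult ln_div ln_realpow)
  moreover have "a*b/r^2 - 1 = -((a-b)^2/(a+b)^2)"
  proof -
    have r2: "r^2 = (a+b)^2/4" unfolding r_def by (simp add: power_divide)
    have p2: "(a+b)^2 > 0" using assms by simp
    have "a*b/r^2 - 1 = (4*a*b - (a+b)^2)/(a+b)^2" using p2 by (simp add: r2 field_simps)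
    also have "4*a*b - (a+b)^2 = -((a-b)^2)" by (simp add: power2_eq_square algebra_simps)
    finally show ?thesis by simp
  qed
  ultimately show ?thesis unfolding r_def by simp
qed

lemma ln_second:
  fixes U v :: real assumes "U > 0" "\<bar>v\<bar> \<le> U/2"
  shows "ln (U+v) + ln (U-v) - 2 * ln U \<ge> - 2 * (v/U)^2"
proof -
  define s where "s = (v/U)^2"
  have a: "\<bar>v/U\<bar> \<le> 1/2" using assms by (simp add: abs_div field_simps)
  have "\<bar>v/U\<bar>^2 \<le> (1/2)^2" by (rule power_mono[OF a]) simp
  then have s: "s \<le> 1/4" "s \<ge> 0" unfolding s_def by (auto simp: power2_abs power_divide)
  have pos: "1 - s > 0" using s by simp
  have "ln (1/(1-s)) \<le> 1/(1-s) - 1" using pos by (intro ln_le_minus_one) simp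
  then have "ln (1-s) \<ge> -(s/(1-s))" using pos by (simp add: ln_div field_simps)
  moreover have "s/(1-s) \<le> 2 * s"
  proof -
    have "s*(s*2) \<le> s*1" using s by (intro mult_left_mono) auto
    then show ?thesis using s pos by (simp add: field_simps)
  qed
  moreover have "ln (U+v) + ln (U-v) - 2 * ln U = ln (1 - s)"
  proof -
    have "U+v > 0" "U-v > 0" using assms by auto
    then have "ln (U+v) + ln (U-v) - 2 * ln U = ln ((U+v)*(U-v)/U^2)"
      using assms by (simp add: ln_mult ln_div ln_realpow)
    also have "(U+v)*(U-v)/U^2 = 1 - s" unfolding s_def using assms by (simp add: field_simps power2_eq_square)
    finally show ?thesis .
  qed
  ultimately show ?thesis unfolding s_def by linarith
qed

lemma ln_diff_up:
  fixes U a :: real assumes "U > 0" "0 \<le> a" "a \<le> U/2"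
  shows "ln U - ln (U - a) \<le> 2*a/U"
proof -
  have p: "U - a > 0" using assms by simp
  have "ln (U/(U-a)) \<le> U/(U-a) - 1" using p assms by (intro ln_le_minus_one) simp
  then have "ln U - ln (U-a) \<le> a/(U-a)" using p assms by (simp add: ln_div field_simps)
  also have "a/(U-a) \<le> 2*a/U"
  proof -
    have "0 \<le> a*(U - 2*a)" using assms by simp
    then have "a*U \<le> 2*a*(U-a)" by (simp add: algebra_simps)
    then show ?thesis using p assms by (simp add: field_simps)
  qed
  finally show ?thesis .
qed



definition colsum :: "real^'m^'n \<Rightarrow> real^'m" where
  "colsum x = (\<chi> j. \<Sum>i\<in>UNIV. x$i$j)"

definition uvec :: "real^'m^'n \<Rightarrow> real^'m^'n \<Rightarrow> real^'n" where
  "uvec u x = (\<chi> i. util u x i)"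

definition Mop :: "real^'m^'n \<Rightarrow> real^'m^'n \<Rightarrow> (real^'m) \<times> (real^'n)" where
  "Mop u x = (colsum x, uvec u x)"

lemma linear_Mop: fixes u :: "real^'m^'n" shows "linear (Mop u)"
proof (rule linearI)
  fix x y :: "real^'m^'n" and c :: real
  show "Mop u (x + y) = Mop u x + Mop u y"
    unfolding Mop_def colsum_def uvec_def util_def
    by (simp add: vec_eq_iff sum.distrib distrib_left)
  show "Mop u (c *\<^sub>R x) = c *\<^sub>R Mop u x"
    unfolding Mop_def colsum_def uvec_def util_def
    by (simp add: vec_eq_iff sum_distrib_left algebra_simps)
qed

lemma hoffman_market:
  fixes u :: "real^'m^'n"
  shows "\<exists>H\<ge>0. \<forall>x xs. (\<forall>i j. 0 \<le> x$i$j) \<longrightarrow> (\<forall>i j. 0 \<le> xs$i$j) \<longrightarrow>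
     (\<exists>x'. (\<forall>i j. 0 \<le> x'$i$j) \<and> colsum x' = colsum xs \<and> uvec u x' = uvec u xs \<and>
        norm (x - x') \<le> H * norm (Mop u x - Mop u xs))"
proof -
  obtain H where H: "H \<ge> 0" "\<And>D. \<exists>D'. domi D' D \<and> Mop u D' = Mop u D \<and> norm D' \<le> H * norm (Mop u D)"
    using hoffman_core[OF linear_Mop[of u]] by blast
  have lin: "linear (Mop u)" by (rule linear_Mop)
  show ?thesis
  proof (intro exI[of _ H] conjI allI impI H(1))
    fix x xs :: "real^'m^'n"
    assume x0: "\<forall>i j. 0 \<le> x$i$j" and xs0: "\<forall>i j. 0 \<le> xs$i$j"
    obtain D' where D': "domi D' (x - xs)" "Mop u D' = Mop u (x - xs)" "norm D' \<le> H * norm (Mop u (x - xs))"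
      using H(2) by blast
    define x' where "x' = x - D'"
    have "\<forall>i j. 0 \<le> x'$i$j"
    proof (intro allI)
      fix i j
      have "(0 \<le> D'$i$j \<and> D'$i$j \<le> x$i$j - xs$i$j) \<or> (x$i$j - xs$i$j \<le> D'$i$j \<and> D'$i$j \<le> 0)"
        using D'(1) unfolding domi_def by simp
      then show "0 \<le> x'$i$j" unfolding x'_def using x0 xs0 by (smt (verit) vector_minus_component)
    qed
    moreover have "Mop u x' = Mop u xs"
      unfolding x'_def using D'(2) lin by (simp add: linear_diff)
    moreover have "x - x' = D'" unfolding x'_def by simp
    moreover have "Mop u (x - xs) = Mop u x - Mop u xs" using lin by (simp add: linear_diff)
    ultimately show "\<exists>x'. (\<forall>i j. 0 \<le> x'$i$j) \<and> colsum x' = colsum xs \<and> uvec u x' = uvec u xs \<and>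
        norm (x - x') \<le> H * norm (Mop u x - Mop u xs)"
      using D'(3) unfolding Mop_def by auto
  qed
qed

lemma norm_Mop2: "(norm (Mop u x - Mop u y))^2 = (norm (colsum x - colsum y))^2 + (norm (uvec u x - uvec u y))^2"
  unfolding Mop_def by (simp add: norm_Pair)

lemma util_nonneg: "(\<forall>i j. 0 \<le> u$i$j) \<Longrightarrow> (\<forall>i j. 0 \<le> x$i$j) \<Longrightarrow> 0 \<le> util u x i"
  unfolding util_def by (intro sum_nonneg) simp

lemma util_ge_term: "(\<forall>i j. 0 \<le> u$i$j) \<Longrightarrow> (\<forall>i j. 0 \<le> x$i$j) \<Longrightarrow> u$i$j * x$i$j \<le> util u x i"
  unfolding util_def by (rule member_le_sum[of j UNIV "\<lambda>b. u$i$b * x$i$b"]) auto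

lemma pigeon:
  fixes xs :: "real^'m^'n"
  assumes "(\<Sum>i\<in>UNIV. xs$i$j) = 1"
  shows "\<exists>i. xs$i$j \<ge> 1 / real CARD('n)"
proof (rule ccontr)
  assume "\<not> ?thesis"
  then have "\<forall>i. xs$i$j < 1 / real CARD('n)" by (auto simp: not_le)
  then have "(\<Sum>i\<in>UNIV. xs$i$j) < (\<Sum>i\<in>(UNIV::'n set). 1 / real CARD('n))"
    by (intro sum_strict_mono) auto
  also have "\<dots> = 1" by simp
  finally show False using assms by simp
qed

lemma A_saddle:
  fixes xs :: "real^'m^'n" and ps :: "real^'m" and w :: "real^'n" and u :: "real^'m^'n"
  assumes u0: "\<forall>i j. u $ i $ j \<ge> 0" and rows: "\<forall>i. \<exists>j. u $ i $ j > 0"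
    and zs: "(xs, ps) \<in> saddle_points (LA w u) ZA"
  shows "\<forall>i j. 0 \<le> xs$i$j" "\<forall>i. util u xs i > 0" "\<forall>j. (\<Sum>i\<in>UNIV. xs$i$j) = 1"
    "\<forall>x. (\<forall>i j. 0 \<le> x$i$j) \<longrightarrow> (\<forall>i. util u x i > 0) \<longrightarrow> LAr w u xs ps \<le> LAr w u x ps"
    "\<forall>q. LA w u xs q = ereal (fA w u xs)"
proof -
  have sp: "(xs,ps) \<in> ZA \<and> (\<forall>z\<in>ZA. LA w u xs (snd z) \<le> LA w u xs ps \<and> LA w u xs ps \<le> LA w u (fst z) ps)"
    using zs unfolding saddle_points_def by simp
  have inZ: "(xs, ps) \<in> ZA" using sp by blast
  have S1: "LA w u xs (snd z) \<le> LA w u xs ps" if "z \<in> ZA" for z :: "(real^'m^'n) \<times> (real^'m)"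
    using sp that by blast
  have S2: "LA w u xs ps \<le> LA w u (fst z) ps" if "z \<in> ZA" for z :: "(real^'m^'n) \<times> (real^'m)"
    using sp that by blast
  show x0: "\<forall>i j. 0 \<le> xs$i$j" using inZ unfolding ZA_def by auto
  define one :: "real^'m^'n" where "one = (\<chi> i j. 1)"
  have one_util: "util u one i > 0" for i
  proof -
    obtain j where "u$i$j > 0" using rows by blast
    then show ?thesis unfolding util_def one_def
      by (intro sum_pos2[of UNIV j]) (use u0 in auto)
  qed
  have "(one, ps) \<in> ZA" unfolding ZA_def one_def by simp
  then have "LA w u xs ps \<le> LA w u one ps" using S2 by force
  also have "\<dots> = ereal (LAr w u one ps)" using one_util by (simp add: LA_pos)
  finally have "LA w u xs ps \<noteq> \<infinity>" by auto
  then show up: "\<forall>i. util u xs i > 0" using LA_nonpos by metis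
  define c :: "real^'m" where "c = (\<chi> j. (\<Sum>i\<in>UNIV. xs$i$j) - 1)"
  have "(xs, ps + c) \<in> ZA" using inZ unfolding ZA_def by simp
  then have "LA w u xs (ps + c) \<le> LA w u xs ps" using S1 by force
  then have "LAr w u xs (ps + c) \<le> LAr w u xs ps" using up by (simp add: LA_pos)
  moreover have "LAr w u xs (ps + c) = LAr w u xs ps + (\<Sum>j\<in>UNIV. (c$j)^2)"
    unfolding LAr_def c_def by (simp add: sum.distrib distrib_right power2_eq_square)
  ultimately have "(\<Sum>j\<in>UNIV. (c$j)^2) \<le> 0" by simp
  then have "\<forall>j. (c$j)^2 = 0" using sum_nonneg_eq_0_iff[of UNIV "\<lambda>j. (c$j)^2"]
    by (simp add: order_antisym sum_nonneg)
  then show cs: "\<forall>j. (\<Sum>i\<in>UNIV. xs$i$j) = 1" unfolding c_def by simp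
  show "\<forall>x. (\<forall>i j. 0 \<le> x$i$j) \<longrightarrow> (\<forall>i. util u x i > 0) \<longrightarrow> LAr w u xs ps \<le> LAr w u x ps"
  proof (intro allI impI)
    fix x :: "real^'m^'n" assume "\<forall>i j. 0 \<le> x$i$j" "\<forall>i. util u x i > 0"
    then have "(x, ps) \<in> ZA" unfolding ZA_def by simp
    then have "LA w u xs ps \<le> LA w u x ps" using S2 by force
    then show "LAr w u xs ps \<le> LAr w u x ps" using up \<open>\<forall>i. util u x i > 0\<close> by (simp add: LA_pos)
  qed
  show "\<forall>q. LA w u xs q = ereal (fA w u xs)" using up cs by (simp add: LA_pos LAr_def)
qed



lemma card_pos_real: "real CARD('n::finite) > 0" by simp

lemma A_pert_basic:
  fixes xs :: "real^'m^'n" and ps :: "real^'m" and w :: "real^'n" and u :: "real^'m^'n"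
  assumes u0: "\<forall>i j. u $ i $ j \<ge> 0"
    and x0: "\<forall>i j. 0 \<le> xs$i$j" and up: "\<forall>i. util u xs i > 0"
    and big: "xs$i$j \<ge> 1 / real CARD('n)"
    and tau: "\<bar>t\<bar> \<le> 1 / (2 * real CARD('n))"
  shows "\<bar>t * u$i$j\<bar> \<le> util u xs i / 2" "\<forall>a b. 0 \<le> (xs + t *\<^sub>R ee i j)$a$b"
    "\<forall>k. util u (xs + t *\<^sub>R ee i j) k > 0"
proof -
  have N: "real CARD('n) > 0" by simp
  have t2: "\<bar>t\<bar> \<le> xs$i$j / 2"
  proof -
    have "1 / (2 * real CARD('n)) = (1 / real CARD('n)) / 2" by simp
    then show ?thesis using tau big by linarith
  qed
  have aU: "u$i$j * xs$i$j \<le> util u xs i" by (rule util_ge_term[OF u0 x0])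
  have "\<bar>t * u$i$j\<bar> = \<bar>t\<bar> * u$i$j" using u0 by (simp add: abs_mult)
  also have "\<dots> \<le> xs$i$j / 2 * u$i$j" using t2 u0 by (intro mult_right_mono) auto
  also have "\<dots> \<le> util u xs i / 2" using aU by (simp add: algebra_simps)
  finally show h1: "\<bar>t * u$i$j\<bar> \<le> util u xs i / 2" .
  show "\<forall>a b. 0 \<le> (xs + t *\<^sub>R ee i j)$a$b"
  proof (intro allI)
    fix a b
    show "0 \<le> (xs + t *\<^sub>R ee i j)$a$b"
      using x0 t2 big N by (auto simp: abs_le_iff)
  qed
  show "\<forall>k. util u (xs + t *\<^sub>R ee i j) k > 0"
  proof
    fix k
    show "util u (xs + t *\<^sub>R ee i j) k > 0"
      unfolding util_ee using up h1 by (auto simp: abs_le_iff) (smt (verit) up)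
  qed
qed

lemma A_pert_min:
  fixes xs :: "real^'m^'n" and ps :: "real^'m" and w :: "real^'n" and u :: "real^'m^'n"
  assumes u0: "\<forall>i j. u $ i $ j \<ge> 0"
    and x0: "\<forall>i j. 0 \<le> xs$i$j" and up: "\<forall>i. util u xs i > 0"
    and mn: "\<forall>x. (\<forall>i j. 0 \<le> x$i$j) \<longrightarrow> (\<forall>i. util u x i > 0) \<longrightarrow> LAr w u xs ps \<le> LAr w u x ps"
    and big: "xs$i$j \<ge> 1 / real CARD('n)"
    and tau: "\<bar>t\<bar> \<le> 1 / (2 * real CARD('n))"
  shows "0 \<le> - w$i * ln (util u xs i + t * u$i$j) + w$i * ln (util u xs i) + ps$j * t"
proof -
  have "LAr w u xs ps \<le> LAr w u (xs + t *\<^sub>R ee i j) ps"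
    using mn A_pert_basic[OF u0 x0 up big tau] by blast
  then show ?thesis unfolding LAr_ee by simp
qed

lemma A_psbound:
  fixes xs :: "real^'m^'n" and ps :: "real^'m" and w :: "real^'n" and u :: "real^'m^'n"
  assumes u0: "\<forall>i j. u $ i $ j \<ge> 0" and w0: "\<forall>i. w$i > 0"
    and x0: "\<forall>i j. 0 \<le> xs$i$j" and up: "\<forall>i. util u xs i > 0"
    and mn: "\<forall>x. (\<forall>i j. 0 \<le> x$i$j) \<longrightarrow> (\<forall>i. util u x i > 0) \<longrightarrow> LAr w u xs ps \<le> LAr w u x ps"
    and big: "xs$i$j \<ge> 1 / real CARD('n)"
  shows "0 \<le> ps$j" "ps$j \<le> 2 * real CARD('n) * w$i"
proof -
  define N where "N = real CARD('n)"
  have N: "N > 0" unfolding N_def by simp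
  define s where "s = 1 / (2 * N)"
  have s: "s > 0" "\<bar>s\<bar> \<le> 1 / (2 * real CARD('n))" "\<bar>-s\<bar> \<le> 1 / (2 * real CARD('n))"
    unfolding s_def N_def by auto
  define U where "U = util u xs i"
  define a where "a = u$i$j"
  have U: "U > 0" unfolding U_def using up by simp
  have a: "a \<ge> 0" unfolding a_def using u0 by simp
  have p1: "0 \<le> - w$i * ln (U + s * a) + w$i * ln U + ps$j * s"
    using A_pert_min[OF u0 x0 up mn big s(2)] unfolding U_def a_def .
  have "U \<le> U + s * a" using a s by simp
  then have "ln U \<le> ln (U + s * a)" using U by simp
  then have "w$i * ln U \<le> w$i * ln (U + s * a)" using w0 by (simp add: mult_left_mono less_imp_le)
  then have "0 \<le> ps$j * s" using p1 by linarith
  then show "0 \<le> ps$j" using s by (simp add: zero_le_mult_iff)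
  have p2: "0 \<le> - w$i * ln (U + (-s) * a) + w$i * ln U + ps$j * (-s)"
    using A_pert_min[OF u0 x0 up mn big s(3)] unfolding U_def a_def .
  have h1: "\<bar>s * a\<bar> \<le> U / 2" using A_pert_basic(1)[OF u0 x0 up big s(2)] unfolding U_def a_def .
  have "ln U - ln (U - s*a) \<le> 2 * (s*a) / U" using U a s h1 by (intro ln_diff_up) auto
  moreover have "ps$j * s \<le> w$i * (ln U - ln (U - s*a))" using p2 by (simp add: algebra_simps)
  ultimately have "ps$j * s \<le> w$i * (2 * (s*a) / U)" using w0
    by (meson less_imp_le mult_left_mono order_trans)
  moreover have "w$i * (2 * (s*a) / U) = (w$i * (2 * a / U)) * s" using U by (simp add: field_simps)
  ultimately have "ps$j * s \<le> (w$i * (2 * a / U)) * s" by linarith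
  then have "ps$j \<le> w$i * (2 * a / U)" using s(1) by (meson mult_right_le_imp_le)
  also have "a / U \<le> N"
  proof -
    have "a * xs$i$j \<le> U" unfolding U_def a_def by (rule util_ge_term[OF u0 x0])
    have "a * (1/N) \<le> a * xs$i$j" using big a unfolding N_def by (intro mult_left_mono) auto
    have "a = N * (a * (1/N))" using N by simp
    also have "\<dots> \<le> N * (a * xs$i$j)" by (rule mult_left_mono[OF \<open>a * (1/N) \<le> a * xs$i$j\<close>]) (use N in simp)
    also have "\<dots> \<le> N * U" by (rule mult_left_mono[OF \<open>a * xs$i$j \<le> U\<close>]) (use N in simp)
    finally have "a \<le> N * U" .
    then show ?thesis using U by (simp add: field_simps)
  qed
  then have "w$i * (2 * a / U) \<le> w$i * (2 * N)" using w0 by (intro mult_left_mono) (auto simp: less_imp_le)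
  finally show "ps$j \<le> 2 * real CARD('n) * w$i" unfolding N_def by (simp add: algebra_simps)
qed

lemma A_dual:
  fixes xs :: "real^'m^'n" and ps p :: "real^'m" and w :: "real^'n" and u :: "real^'m^'n"
  assumes u0: "\<forall>i j. u $ i $ j \<ge> 0" and w0: "\<forall>i. w$i > 0"
    and x0: "\<forall>i j. 0 \<le> xs$i$j" and up: "\<forall>i. util u xs i > 0" and cs: "\<forall>j. (\<Sum>i\<in>UNIV. xs$i$j) = 1"
    and mn: "\<forall>x. (\<forall>i j. 0 \<le> x$i$j) \<longrightarrow> (\<forall>i. util u x i > 0) \<longrightarrow> LAr w u xs ps \<le> LAr w u x ps"
    and big: "xs$i$j \<ge> 1 / real CARD('n)"
    and tau: "\<bar>t\<bar> \<le> 1 / (2 * real CARD('n))"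
  shows "fA w u xs - LAr w u (xs + t *\<^sub>R ee i j) p \<ge> -(p$j - ps$j)*t - 2*w$i*(real CARD('n)*t)^2"
proof -
  define N where "N = real CARD('n)"
  have N: "N > 0" unfolding N_def by simp
  define U where "U = util u xs i"
  define a where "a = u$i$j"
  have U: "U > 0" unfolding U_def using up by simp
  have a: "a \<ge> 0" unfolding a_def using u0 by simp
  have tau': "\<bar>-t\<bar> \<le> 1 / (2 * real CARD('n))" using tau by simp
  have p2: "0 \<le> - w$i * ln (U + (-t) * a) + w$i * ln U + ps$j * (-t)"
    using A_pert_min[OF u0 x0 up mn big tau'] unfolding U_def a_def .
  have h1: "\<bar>t * a\<bar> \<le> U / 2" using A_pert_basic(1)[OF u0 x0 up big tau] unfolding U_def a_def .
  have LAxs: "LAr w u xs p = fA w u xs" unfolding LAr_def using cs by simp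
  have e1: "fA w u xs - LAr w u (xs + t *\<^sub>R ee i j) p = w$i * ln (U + t * a) - w$i * ln U - p$j * t"
    unfolding LAr_ee LAxs U_def a_def by simp
  have e2: "w$i * ln (U + t * a) - w$i * ln U - p$j * t \<ge> w$i * (ln (U + t*a) + ln (U - t*a) - 2 * ln U) - (p$j - ps$j) * t"
    using p2 by (simp add: algebra_simps)
  have e3: "ln (U + t*a) + ln (U - t*a) - 2 * ln U \<ge> - 2 * ((t*a)/U)^2"
    using U h1 by (intro ln_second) auto
  have e4: "((t*a)/U)^2 \<le> (N*t)^2"
  proof -
    have "a * xs$i$j \<le> U" unfolding U_def a_def by (rule util_ge_term[OF u0 x0])
    have "a * (1/N) \<le> a * xs$i$j" using big a unfolding N_def by (intro mult_left_mono) auto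
    have "a = N * (a * (1/N))" using N by simp
    also have "\<dots> \<le> N * (a * xs$i$j)" by (rule mult_left_mono[OF \<open>a * (1/N) \<le> a * xs$i$j\<close>]) (use N in simp)
    also have "\<dots> \<le> N * U" by (rule mult_left_mono[OF \<open>a * xs$i$j \<le> U\<close>]) (use N in simp)
    finally have "a \<le> N * U" .
    then have "a / U \<le> N" using U by (simp add: field_simps)
    then have "\<bar>t\<bar> * (a/U) \<le> \<bar>t\<bar> * N" by (intro mult_left_mono) auto
    then have "\<bar>t*a/U\<bar> \<le> \<bar>t\<bar> * N" using a U by (simp add: abs_mult abs_div)
    then have "\<bar>t*a/U\<bar>^2 \<le> (\<bar>t\<bar> * N)^2" by (intro power_mono) auto
    moreover have "\<bar>t*a/U\<bar>^2 = ((t*a)/U)^2" by (simp only: power2_abs)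
    moreover have "(\<bar>t\<bar> * N)^2 = (N*t)^2" by (simp add: power_mult_distrib)
    ultimately show ?thesis by simp
  qed
  have "w$i * (- 2 * ((t*a)/U)^2) \<le> w$i * (ln (U + t*a) + ln (U - t*a) - 2 * ln U)"
    using e3 w0 by (intro mult_left_mono) (auto simp: less_imp_le)
  moreover have "w$i * (- 2 * (N*t)^2) \<le> w$i * (- 2 * ((t*a)/U)^2)"
  proof (rule mult_left_mono)
    show "- 2 * (N*t)^2 \<le> - 2 * ((t*a)/U)^2" using e4 by linarith
    show "0 \<le> w$i" using w0 less_imp_le by blast
  qed
  ultimately show ?thesis unfolding N_def[symmetric] using e1 e2 by linarith
qed



lemma util_le_bound:
  fixes x u :: "real^'m^'n"
  assumes u0: "\<forall>i j. u $ i $ j \<ge> 0" and xb: "\<forall>i j. x$i$j \<le> R" and R0: "R \<ge> 0"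
  shows "util u x i \<le> (\<Sum>a\<in>UNIV. \<Sum>b\<in>UNIV. u$a$b) * R"
proof -
  have "util u x i \<le> (\<Sum>b\<in>UNIV. u$i$b * R)" unfolding util_def
    using u0 xb by (intro sum_mono mult_left_mono) auto
  also have "\<dots> = (\<Sum>b\<in>UNIV. u$i$b) * R" by (simp add: sum_distrib_right)
  also have "(\<Sum>b\<in>UNIV. u$i$b) \<le> (\<Sum>a\<in>UNIV. \<Sum>b\<in>UNIV. u$a$b)"
    using u0 by (intro member_le_sum[of i UNIV "\<lambda>a. \<Sum>b\<in>UNIV. u$a$b"]) (auto intro: sum_nonneg)
  ultimately show ?thesis using R0
    by (meson mult_right_mono order_trans)
qed

lemma A_primal:
  fixes xs x :: "real^'m^'n" and ps :: "real^'m" and w :: "real^'n" and u :: "real^'m^'n"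
  assumes u0: "\<forall>i j. u $ i $ j \<ge> 0" and w0: "\<forall>i. w$i > 0"
    and x0: "\<forall>i j. 0 \<le> xs$i$j" and up: "\<forall>i. util u xs i > 0" and cs: "\<forall>j. (\<Sum>i\<in>UNIV. xs$i$j) = 1"
    and mn: "\<forall>x. (\<forall>i j. 0 \<le> x$i$j) \<longrightarrow> (\<forall>i. util u x i > 0) \<longrightarrow> LAr w u xs ps \<le> LAr w u x ps"
    and y0: "\<forall>i j. 0 \<le> x$i$j" and yp: "\<forall>i. util u x i > 0"
    and R: "R \<ge> 0" and xb: "\<forall>i j. x$i$j \<le> R"
    and K: "K = (\<Sum>a\<in>UNIV. \<Sum>b\<in>UNIV. u$a$b) * (R + 1)" and wm: "\<forall>i. wmin \<le> w$i" "wmin > 0"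
  shows "LAr w u x ps - fA w u xs \<ge> (wmin / K^2) * (norm (uvec u x - uvec u xs))^2"
proof -
  define mid where "mid = (1/2) *\<^sub>R (x + xs)"
  have mid_nth: "mid$i$j = (x$i$j + xs$i$j)/2" for i j unfolding mid_def by simp
  have um: "util u mid i = (util u x i + util u xs i)/2" for i
    unfolding util_def mid_nth by (simp add: sum.distrib sum_divide_distrib algebra_simps add_divide_distrib)
  have cm: "(\<Sum>i\<in>UNIV. mid$i$j) - 1 = ((\<Sum>i\<in>UNIV. x$i$j) - 1)/2" for j
    unfolding mid_nth using cs by (simp add: sum.distrib sum_divide_distrib[symmetric] field_simps)
  have m0: "\<forall>i j. 0 \<le> mid$i$j" using x0 y0 unfolding mid_nth by (simp add: add_nonneg_nonneg)
  have mp: "\<forall>i. util u mid i > 0" using up yp unfolding um by (simp add: add_pos_pos)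
  have g: "LAr w u xs ps \<le> LAr w u mid ps" using mn m0 mp by blast
  have LAxs: "LAr w u xs ps = fA w u xs" unfolding LAr_def using cs by simp
  have LAmid: "LAr w u mid ps = fA w u mid + (1/2) * (\<Sum>j\<in>UNIV. ps$j * ((\<Sum>i\<in>UNIV. x$i$j) - 1))"
  proof -
    have "(\<Sum>j\<in>UNIV. ps$j * (((\<Sum>i\<in>UNIV. x$i$j) - 1)/2)) = (1/2) * (\<Sum>j\<in>UNIV. ps$j * ((\<Sum>i\<in>UNIV. x$i$j) - 1))"
      unfolding sum_distrib_left by (intro sum.cong) auto
    then show ?thesis unfolding LAr_def cm by simp
  qed
  have key: "LAr w u x ps - fA w u xs \<ge> fA w u x + fA w u xs - 2 * fA w u mid"
    using g LAxs LAmid unfolding LAr_def by linarith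
  have "fA w u x + fA w u xs - 2 * fA w u mid =
        (\<Sum>i\<in>UNIV. w$i * (- ln (util u x i) - ln (util u xs i) + 2 * ln ((util u x i + util u xs i)/2)))"
    unfolding fA_def um by (simp add: sum.distrib sum_distrib_left algebra_simps sum_subtractf sum_negf)
  also have "\<dots> \<ge> (\<Sum>i\<in>UNIV. (wmin / K^2) * (util u x i - util u xs i)^2)"
  proof (rule sum_mono)
    fix i
    define a where "a = util u x i"
    define b where "b = util u xs i"
    have a: "a > 0" "b > 0" unfolding a_def b_def using up yp by auto
    have Us: "\<forall>i j. xs$i$j \<le> 1"
    proof (intro allI)
      fix i j
      have "xs$i$j \<le> (\<Sum>a\<in>UNIV. xs$a$j)" using x0 by (intro member_le_sum) auto
      then show "xs$i$j \<le> 1" using cs by simp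
    qed
    have "a \<le> (\<Sum>a\<in>UNIV. \<Sum>b\<in>UNIV. u$a$b) * R" unfolding a_def by (rule util_le_bound[OF u0 xb R])
    moreover have "b \<le> (\<Sum>a\<in>UNIV. \<Sum>b\<in>UNIV. u$a$b) * 1" unfolding b_def by (rule util_le_bound[OF u0 Us]) simp
    ultimately have abK: "a + b \<le> K" unfolding K by (simp add: algebra_simps)
    have "(a+b)^2 \<le> K^2" using abK a by (intro power_mono) auto
    have Kpos: "K > 0" using abK a by simp
    have l: "- ln a - ln b + 2 * ln ((a+b)/2) \<ge> (a-b)^2/(a+b)^2" by (rule ln_mid[OF a])
    have "(a-b)^2/K^2 \<le> (a-b)^2/(a+b)^2"
      using \<open>(a+b)^2 \<le> K^2\<close> a Kpos by (intro divide_left_mono) auto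
    then have "wmin * ((a-b)^2/K^2) \<le> w$i * ((a-b)^2/(a+b)^2)"
      using wm w0 by (intro mult_mono) (auto simp: less_imp_le)
    also have "\<dots> \<le> w$i * (- ln a - ln b + 2 * ln ((a+b)/2))"
      using l w0 by (intro mult_left_mono) (auto simp: less_imp_le)
    finally show "(wmin / K^2) * (util u x i - util u xs i)^2 \<le>
        w$i * (- ln (util u x i) - ln (util u xs i) + 2 * ln ((util u x i + util u xs i)/2))"
      unfolding a_def b_def by simp
  qed
  also have "(\<Sum>i\<in>UNIV. (wmin / K^2) * (util u x i - util u xs i)^2) = (wmin / K^2) * (norm (uvec u x - uvec u xs))^2"
    unfolding norm2_vec uvec_def by (simp add: sum_distrib_left)
  finally show ?thesis using key by linarith
qed



lemma final_arith:
  fixes H c1 xi eta Mc V D d I Phi :: real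
  assumes H: "H \<ge> 0" and c1: "c1 > 0" and xi: "xi > 0" and eta: "eta > 0" and Mc: "Mc > 0"
    and V: "V \<ge> 0" and D: "D \<ge> 0"
    and I: "I \<le> H^2 * (V + D) + Mc * d^2"
    and Phi: "Phi \<ge> c1 * D + V / (2*xi) + eta * d^2 / 2"
  shows "min c1 (min (1/(2*xi)) (eta/(2*Mc))) / (H^2 + 1) * I \<le> Phi"
proof -
  define m where "m = min c1 (min (1/(2*xi)) (eta/(2*Mc)))"
  have m0: "m > 0" unfolding m_def using c1 xi eta Mc by auto
  have hp: "H^2 + 1 > 0" by (metis add_pos_nonneg zero_less_one zero_le_power2 add.commute)
  have r: "m / (H^2+1) \<ge> 0" using m0 hp by simp
  have "m / (H^2 + 1) * I \<le> m / (H^2+1) * (H^2 * (V + D) + Mc * d^2)"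
    using I r by (intro mult_left_mono) auto
  also have "\<dots> = m * (H^2/(H^2+1)) * (V + D) + m / (H^2+1) * (Mc * d^2)"
    unfolding divide_inverse by (simp add: algebra_simps)
  also have "\<dots> \<le> m * 1 * (V + D) + m * (Mc * d^2)"
  proof -
    have h1: "H^2/(H^2+1) \<le> 1" using hp by simp
    have a1: "m * (H^2/(H^2+1)) * (V + D) \<le> m * 1 * (V + D)"
      using h1 m0 V D by (intro mult_right_mono mult_left_mono) auto
    have "1/(H^2+1) \<le> 1" using hp by (simp add: field_simps)
    then have "m * (1/(H^2+1)) \<le> m * 1" using m0 by (intro mult_left_mono) auto
    then have a2: "m / (H^2+1) * (Mc * d^2) \<le> m * (Mc * d^2)" using Mc by (intro mult_right_mono) auto
    show ?thesis using a1 a2 by linarith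
  qed
  also have "\<dots> \<le> c1 * D + V / (2*xi) + eta * d^2 / 2"
  proof -
    have "m * V \<le> (1/(2*xi)) * V" unfolding m_def using V by (intro mult_right_mono) auto
    moreover have "m * D \<le> c1 * D" unfolding m_def using D by (intro mult_right_mono) auto
    moreover have "m * (Mc * d^2) \<le> (eta/(2*Mc)) * (Mc * d^2)" unfolding m_def using Mc
      by (intro mult_right_mono) auto
    moreover have "(eta/(2*Mc)) * (Mc * d^2) = eta * d^2 / 2" using Mc by simp
    ultimately show ?thesis by (simp add: algebra_simps)
  qed
  also have "\<dots> \<le> Phi" by (rule Phi)
  finally show ?thesis unfolding m_def .
qed



lemma LA_eq_transfer:
  fixes x xs :: "real^'m^'n"
  assumes "uvec u x = uvec u xs" "colsum x = colsum xs"
  shows "LA w u x = LA w u xs"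
proof -
  have "util u x i = util u xs i" for i
  proof -
    have "(uvec u x)$i = (uvec u xs)$i" using assms(1) by simp
    then show ?thesis unfolding uvec_def by simp
  qed
  moreover have "(\<Sum>i\<in>UNIV. x$i$j) = (\<Sum>i\<in>UNIV. xs$i$j)" for j
  proof -
    have "(colsum x)$j = (colsum xs)$j" using assms(2) by simp
    then show ?thesis unfolding colsum_def by simp
  qed
  ultimately show ?thesis unfolding LA_def by (simp add: fun_eq_iff)
qed

lemma partA:
  fixes w :: "real^'n" and u :: "real^'m^'n"
  assumes w_pos: "\<forall>i. w $ i > 0"
    and u0: "\<forall>i j. u $ i $ j \<ge> 0"
    and rows: "\<forall>i. \<exists>j. u $ i $ j > 0"
  shows "\<forall>\<xi>>0. \<forall>S. S \<subseteq> ZA \<and> bounded S \<longrightarrow>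
            (\<exists>\<alpha>>0. \<forall>zs\<in>saddle_points (LA w u) ZA. \<forall>z\<in>S.
               Gsm (LA w u) ZA \<xi> z zs \<ge> ereal (\<alpha> * (infdist z (saddle_points (LA w u) ZA))\<^sup>2))"
proof (intro allI impI)
  fix \<xi> :: real and S :: "((real^'m^'n) \<times> (real^'m)) set"
  assume xi: "\<xi> > 0" and SS: "S \<subseteq> ZA \<and> bounded S"
  obtain R where R: "R > 0" "\<forall>z\<in>S. norm z \<le> R" using SS bounded_pos by blast
  obtain H where H: "H \<ge> 0" "\<forall>x xs. (\<forall>i j. 0 \<le> x$i$j) \<longrightarrow> (\<forall>i j. 0 \<le> xs$i$j) \<longrightarrow>
     (\<exists>x'. (\<forall>i j. 0 \<le> x'$i$j) \<and> colsum x' = colsum xs \<and> uvec u x' = uvec u xs \<and>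
        norm (x - x') \<le> H * norm (Mop u x - Mop u xs))"
    using hoffman_market[of u] by blast
  define N where "N = real CARD('n)"
  define Mc where "Mc = real CARD('m)"
  define W where "W = (\<Sum>i\<in>UNIV. w$i)"
  define wmin where "wmin = Min (range (\<lambda>i. w$i))"
  define K where "K = (\<Sum>a\<in>UNIV. \<Sum>b\<in>UNIV. u$a$b) * (R + 1)"
  define c1 where "c1 = wmin / K^2"
  define B where "B = R + 2 * N * W"
  define eta where "eta = 1 / (2 * N * (B + 1) + 4 * W * N^2 + \<xi>)"
  define \<alpha> where "\<alpha> = min c1 (min (1/(2*\<xi>)) (eta/(2*Mc))) / (H^2 + 1)"
  have N: "N > 0" unfolding N_def by simp
  have Mc: "Mc > 0" unfolding Mc_def by simp
  have wle: "w$i \<le> W" for i unfolding W_def using w_pos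
    by (intro member_le_sum) (auto simp: less_imp_le)
  have W: "W > 0" using wle[of undefined] w_pos[rule_format, of undefined] by linarith
  have wm: "\<forall>i. wmin \<le> w$i" "wmin > 0" unfolding wmin_def using w_pos by auto
  have usum: "(\<Sum>a\<in>UNIV. \<Sum>b\<in>UNIV. u$a$b) > 0"
  proof -
    obtain i0 :: 'n where True by simp
    obtain j0 where "u$i0$j0 > 0" using rows by blast
    then have "(\<Sum>b\<in>UNIV. u$i0$b) > 0" using u0 by (intro sum_pos2[of UNIV j0]) auto
    then show ?thesis using u0 by (intro sum_pos2[of UNIV i0]) (auto intro: sum_nonneg)
  qed
  have K: "K > 0" unfolding K_def using usum R by simp
  have c1: "c1 > 0" unfolding c1_def using wm K by simp
  have B: "B \<ge> 0" unfolding B_def using R N W by simp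
  have den: "2 * N * (B + 1) + 4 * W * N^2 + \<xi> > 0" using N B W xi by (simp add: add_pos_nonneg)
  have eta: "eta > 0" unfolding eta_def using den by simp
  have eta1: "eta * (2 * N * (B + 1)) \<le> 1"
  proof -
    have "2 * N * (B + 1) \<le> 2 * N * (B + 1) + 4 * W * N^2 + \<xi>" using W xi by simp
    then show ?thesis unfolding eta_def using den by (simp add: pos_divide_le_eq)
  qed
  have eta2: "eta * (4 * W * N^2 + \<xi>) \<le> 1"
  proof -
    have "4 * W * N^2 + \<xi> \<le> 2 * N * (B + 1) + 4 * W * N^2 + \<xi>" using N B by simp
    then show ?thesis unfolding eta_def using den by (simp add: pos_divide_le_eq)
  qed
  have alpha: "\<alpha> > 0"
  proof -
    have hp: "H^2 + 1 > 0" by (metis add_pos_nonneg zero_less_one zero_le_power2 add.commute)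
    have "min c1 (min (1/(2*\<xi>)) (eta/(2*Mc))) > 0" using c1 xi eta Mc by simp
    then show ?thesis unfolding \<alpha>_def using hp by simp
  qed
  show "\<exists>\<alpha>>0. \<forall>zs\<in>saddle_points (LA w u) ZA. \<forall>z\<in>S.
               Gsm (LA w u) ZA \<xi> z zs \<ge> ereal (\<alpha> * (infdist z (saddle_points (LA w u) ZA))\<^sup>2)"
  proof (intro exI[of _ \<alpha>] conjI alpha ballI)
    fix zs z assume zsS: "zs \<in> saddle_points (LA w u) ZA" and zS: "z \<in> S"
    obtain xs ps where zs: "zs = (xs, ps)" by (cases zs)
    obtain x p where z: "z = (x, p)" by (cases z)
    note sad = A_saddle[OF u0 rows zsS[unfolded zs]]
    have x0: "\<forall>i j. 0 \<le> xs$i$j" and up: "\<forall>i. util u xs i > 0" and cs: "\<forall>j. (\<Sum>i\<in>UNIV. xs$i$j) = 1"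
      and mn: "\<forall>x. (\<forall>i j. 0 \<le> x$i$j) \<longrightarrow> (\<forall>i. util u x i > 0) \<longrightarrow> LAr w u xs ps \<le> LAr w u x ps"
      and LAxs: "\<forall>q. LA w u xs q = ereal (fA w u xs)" using sad by blast+
    have zsZ: "zs \<in> ZA" using zsS unfolding saddle_points_def by blast
    have zZ: "z \<in> ZA" using zS SS by blast
    have y0: "\<forall>i j. 0 \<le> x$i$j" using zZ unfolding z ZA_def by simp
    have Gup: "Qgap (LA w u) z zh - ereal (\<xi> / 2 * (dist zh zs)\<^sup>2) \<le> Gsm (LA w u) ZA \<xi> z zs"
      if "zh \<in> ZA" for zh
      unfolding Gsm_def by (rule SUP_upper[OF that])
    show "Gsm (LA w u) ZA \<xi> z zs \<ge> ereal (\<alpha> * (infdist z (saddle_points (LA w u) ZA))\<^sup>2)"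
    proof (cases "\<forall>i. util u x i > 0")
      case False
      have "Qgap (LA w u) z zs - ereal (\<xi> / 2 * (dist zs zs)\<^sup>2) = \<infinity>"
        unfolding Qgap_def z zs using LA_nonpos[OF False] LAxs by simp
      then have "Gsm (LA w u) ZA \<xi> z zs = \<infinity>" using Gup[OF zsZ] by simp
      then show ?thesis by simp
    next
      case True
      note yp = True
      have nz: "norm z \<le> R" using R zS by blast
      have xb: "\<forall>i j. x$i$j \<le> R"
      proof (intro allI)
        fix i j
        have "x$i$j \<le> \<bar>x$i$j\<bar>" by simp
        also have "\<dots> \<le> norm (x$i)" by (rule component_le_norm_cart)
        also have "\<dots> \<le> norm x" by (rule Finite_Cartesian_Product.norm_nth_le)
        also have "\<dots> \<le> norm z" unfolding z by (rule norm_fst_le)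
        finally show "x$i$j \<le> R" using nz by simp
      qed
      have pb: "\<bar>p$j\<bar> \<le> R" for j
      proof -
        have "\<bar>p$j\<bar> \<le> norm p" by (rule component_le_norm_cart)
        also have "\<dots> \<le> norm z" unfolding z by (rule norm_snd_le)
        finally show ?thesis using nz by simp
      qed
      define f where "f = (\<lambda>j. \<bar>p$j - ps$j\<bar>)"
      have "Max (range f) \<in> range f" by (intro Max_in) auto
      then obtain jm where jm: "f jm = Max (range f)" by (metis imageE)
      have fle: "f j \<le> f jm" for j unfolding jm by (intro Max_ge) auto
      obtain im where im: "xs$im$jm \<ge> 1 / real CARD('n)" using pigeon cs by blast
      have psb: "0 \<le> ps$jm" "ps$jm \<le> 2 * real CARD('n) * w$im"
        using A_psbound[OF u0 w_pos x0 up mn im] by auto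
      define d where "d = p$jm - ps$jm"
      define t where "t = - eta * d"
      have dB: "\<bar>d\<bar> \<le> B"
      proof -
        have "2 * N * w$im \<le> 2 * N * W" using wle[of im] N by (intro mult_left_mono) auto
        then have "ps$jm \<le> 2 * N * W" using psb(2) unfolding N_def by linarith
        then show ?thesis unfolding d_def B_def using pb[of jm] psb by linarith
      qed
      have tb: "\<bar>t\<bar> \<le> 1 / (2 * real CARD('n))"
      proof -
        have "\<bar>t\<bar> = eta * \<bar>d\<bar>" unfolding t_def using eta by (simp add: abs_mult)
        also have "\<dots> \<le> eta * (B + 1)" using dB eta by (intro mult_left_mono) auto
        also have "\<dots> \<le> 1 / (2 * N)" using eta1 N by (simp add: field_simps)
        finally show ?thesis unfolding N_def .
      qed
      have dual: "fA w u xs - LAr w u (xs + t *\<^sub>R ee im jm) p \<ge> -(p$jm - ps$jm)*t - 2*w$im*(N*t)^2"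
        using A_dual[OF u0 w_pos x0 up cs mn im tb] unfolding N_def .
      have pert: "\<forall>a b. 0 \<le> (xs + t *\<^sub>R ee im jm)$a$b"
        using A_pert_basic(2)[OF u0 x0 up im tb] .
      have dual2: "fA w u xs - LAr w u (xs + t *\<^sub>R ee im jm) p - \<xi>/2 * t^2 \<ge> eta * d^2 / 2"
      proof -
        have e: "-(p$jm - ps$jm)*t - 2*w$im*(N*t)^2 - \<xi>/2 * t^2 = eta * d^2 - eta^2 * d^2 * (2*w$im*N^2 + \<xi>/2)"
          unfolding t_def d_def by (simp add: power2_eq_square algebra_simps)
        have "eta * (2*w$im*N^2 + \<xi>/2) \<le> 1/2"
        proof -
          have "2*w$im*N^2 \<le> 2*W*N^2" using wle[of im] by (simp add: mult_right_mono)
          then have "eta * (2*w$im*N^2 + \<xi>/2) \<le> eta * (2*W*N^2 + \<xi>/2)" using eta by (intro mult_left_mono) auto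
          also have "\<dots> = (eta * (4 * W * N^2 + \<xi>))/2" by (simp add: algebra_simps)
          finally show ?thesis using eta2 by linarith
        qed
        then have "eta^2 * d^2 * (2*w$im*N^2 + \<xi>/2) \<le> eta * d^2 * (1/2)"
        proof -
          assume a: "eta * (2*w$im*N^2 + \<xi>/2) \<le> 1/2"
          have "eta^2 * d^2 * (2*w$im*N^2 + \<xi>/2) = (eta * d^2) * (eta * (2*w$im*N^2 + \<xi>/2))"
            by (simp add: power2_eq_square algebra_simps)
          also have "\<dots> \<le> (eta * d^2) * (1/2)" using a eta by (intro mult_left_mono) auto
          finally show ?thesis .
        qed
        then show ?thesis using dual e by linarith
      qed
      have primal: "LAr w u x ps - fA w u xs \<ge> c1 * (norm (uvec u x - uvec u xs))^2"
        unfolding c1_def using A_primal[OF u0 w_pos x0 up cs mn y0 yp _ xb K_def wm] R by simp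
      define v where "v = colsum x - 1"
      define ph where "ph = ps + (1/\<xi>) *\<^sub>R v"
      define xh where "xh = xs + t *\<^sub>R ee im jm"
      have vj: "v$j = (\<Sum>i\<in>UNIV. x$i$j) - 1" for j unfolding v_def colsum_def by simp
      have LAph: "LAr w u x ph = LAr w u x ps + (1/\<xi>) * (norm v)^2"
      proof -
        have "(\<Sum>j\<in>UNIV. ph$j * ((\<Sum>i\<in>UNIV. x$i$j) - 1)) = (\<Sum>j\<in>UNIV. ps$j * ((\<Sum>i\<in>UNIV. x$i$j) - 1)) + (1/\<xi>) * (\<Sum>j\<in>UNIV. (v$j)^2)"
          unfolding vj[symmetric] ph_def
          by (simp add: sum.distrib sum_distrib_left distrib_right power2_eq_square mult.assoc)
        then show ?thesis unfolding LAr_def norm2_vec by simp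
      qed
      have xhp: "\<forall>k. util u xh k > 0" unfolding xh_def using A_pert_basic(3)[OF u0 x0 up im tb] .
      have zhZ: "(xh, ph) \<in> ZA" unfolding ZA_def xh_def using pert by simp
      have Q: "Qgap (LA w u) z (xh, ph) = ereal (LAr w u x ph - LAr w u xh p)"
        unfolding Qgap_def z using LA_pos[OF yp] LA_pos[OF xhp] by simp
      have dd: "(dist (xh, ph) zs)^2 = t^2 + (1/\<xi>)^2 * (norm v)^2"
      proof -
        have "xh - xs = t *\<^sub>R ee im jm" unfolding xh_def by simp
        then have "dist xh xs = \<bar>t\<bar>" unfolding dist_norm by (simp only: norm_ee_scale)
        moreover have "dist ph ps = (1/\<xi>) * norm v" unfolding ph_def dist_norm using xi by simp
        ultimately show ?thesis unfolding zs dist_Pair_Pair using xi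
          by (simp add: power_divide)
      qed
      define Phi where "Phi = LAr w u x ph - LAr w u xh p - \<xi> / 2 * (t^2 + (1/\<xi>)^2 * (norm v)^2)"
      have e: "Qgap (LA w u) z (xh, ph) - ereal (\<xi> / 2 * (dist (xh, ph) zs)\<^sup>2) = ereal Phi"
        by (simp only: Q dd Phi_def ereal_minus(1))
      have Gge: "ereal Phi \<le> Gsm (LA w u) ZA \<xi> z zs"
        using Gup[OF zhZ] by (simp only: e)
      have Phi_ge: "Phi \<ge> c1 * (norm (uvec u x - uvec u xs))^2 + (norm v)^2 / (2*\<xi>) + eta * d^2 / 2"
      proof -
        have "\<xi> / 2 * ((1/\<xi>)^2 * (norm v)^2) = (norm v)^2 / (2*\<xi>)" using xi by (simp add: power2_eq_square field_simps)
        moreover have "(1/\<xi>) * (norm v)^2 = (norm v)^2 / \<xi>" by simp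
        moreover have "\<xi> / 2 * (t^2 + (1/\<xi>)^2 * (norm v)^2) = \<xi>/2 * t^2 + \<xi> / 2 * ((1/\<xi>)^2 * (norm v)^2)"
          by (simp add: distrib_left)
        moreover have "(norm v)^2 / \<xi> - (norm v)^2 / (2*\<xi>) = (norm v)^2 / (2*\<xi>)" using xi by (simp add: field_simps)
        ultimately show ?thesis unfolding Phi_def LAph using primal dual2 unfolding xh_def
          by linarith
      qed
      obtain x' where x': "\<forall>i j. 0 \<le> x'$i$j" "colsum x' = colsum xs" "uvec u x' = uvec u xs"
        "norm (x - x') \<le> H * norm (Mop u x - Mop u xs)"
        using mp[OF mp[OF H(2)[THEN spec[of _ x], THEN spec[of _ xs]] y0] x0] by blast
      have LAeq: "LA w u x' = LA w u xs" by (rule LA_eq_transfer[OF x'(3) x'(2)])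
      have c: "\<forall>z'\<in>ZA. LA w u xs (snd z') \<le> LA w u xs ps \<and> LA w u xs ps \<le> LA w u (fst z') ps"
        using zsS unfolding zs saddle_points_def by simp
      have "(x', ps) \<in> ZA" using x'(1) unfolding ZA_def by simp
      then have x'Z: "(x', ps) \<in> saddle_points (LA w u) ZA"
        using c unfolding saddle_points_def by (simp add: LAeq)
      have cxs: "colsum xs = 1" using cs unfolding colsum_def by (simp add: vec_eq_iff)
      have nM: "(norm (Mop u x - Mop u xs))^2 = (norm v)^2 + (norm (uvec u x - uvec u xs))^2"
        unfolding norm_Mop2 v_def cxs ..
      have nx: "(norm (x - x'))^2 \<le> H^2 * ((norm v)^2 + (norm (uvec u x - uvec u xs))^2)"
      proof -
        have "(norm (x - x'))^2 \<le> (H * norm (Mop u x - Mop u xs))^2" using x'(4) by (intro power_mono) auto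
        then show ?thesis unfolding power_mult_distrib nM .
      qed
      have np: "(norm (p - ps))^2 \<le> Mc * d^2"
      proof -
        have "(norm (p - ps))^2 = (\<Sum>j\<in>UNIV. (p$j - ps$j)^2)" unfolding norm2_vec by simp
        also have "\<dots> \<le> (\<Sum>j\<in>(UNIV::'m set). d^2)"
        proof (rule sum_mono)
          fix j
          have "\<bar>p$j - ps$j\<bar> \<le> \<bar>d\<bar>" using fle[of j] unfolding f_def d_def .
          then have "\<bar>p$j - ps$j\<bar>^2 \<le> \<bar>d\<bar>^2" by (intro power_mono) auto
          then show "(p$j - ps$j)^2 \<le> d^2" by simp
        qed
        also have "\<dots> = Mc * d^2" unfolding Mc_def by simp
        finally show ?thesis .
      qed
      have idist: "(infdist z (saddle_points (LA w u) ZA))^2 \<le> H^2 * ((norm v)^2 + (norm (uvec u x - uvec u xs))^2) + Mc * d^2"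
      proof -
        have "infdist z (saddle_points (LA w u) ZA) \<le> dist z (x', ps)" by (rule infdist_le[OF x'Z])
        then have "(infdist z (saddle_points (LA w u) ZA))^2 \<le> (dist z (x', ps))^2"
          by (intro power_mono infdist_nonneg)
        also have "\<dots> = (norm (x - x'))^2 + (norm (p - ps))^2" unfolding z dist_Pair_Pair by (simp add: dist_norm)
        finally show ?thesis using nx np by linarith
      qed
      have "\<alpha> * (infdist z (saddle_points (LA w u) ZA))^2 \<le> Phi"
        unfolding \<alpha>_def
        by (rule final_arith[OF H(1) c1 xi eta Mc zero_le_power2 zero_le_power2 idist Phi_ge])
      then show ?thesis using Gge by (meson ereal_less_eq(3) order_trans)
    qed
  qed
qed



definition eb :: "'n \<Rightarrow> real^'n" where "eb i = (\<chi> k. if k = i then 1 else 0)"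

lemma eb_nth[simp]: "eb i $ k = (if k = i then 1 else 0)" unfolding eb_def by simp

lemma norm_eb_scale: "norm (s *\<^sub>R eb i :: real^'n) = \<bar>s\<bar>"
proof -
  have "(norm (s *\<^sub>R eb i :: real^'n))^2 = (\<Sum>k\<in>UNIV. (if k = i then s^2 else 0))"
    unfolding norm2_vec by (intro sum.cong refl) auto
  also have "\<dots> = s^2" by simp
  finally have "(norm (s *\<^sub>R eb i :: real^'n))^2 = \<bar>s\<bar>^2" by simp
  then show ?thesis using norm_ge_zero abs_ge_zero power2_eq_iff_nonneg by blast
qed

definition LBr :: "real^'n \<Rightarrow> real^'m^'n \<Rightarrow> real^'m^'n \<Rightarrow> real^'n \<Rightarrow> real^'m \<Rightarrow> real^'n \<Rightarrow> real" where
  "LBr w u x t p y = - (\<Sum>i\<in>UNIV. w $ i * ln (t $ i))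
            + (\<Sum>j\<in>UNIV. p $ j * ((\<Sum>i\<in>UNIV. x $ i $ j) - 1))
            + (\<Sum>i\<in>UNIV. y $ i * (t $ i - util u x i))"

lemma LB_eq: "LB w u (x, t) (p, y) = ereal (LBr w u x t p y)"
  unfolding LB_def LBr_def by simp

lemma LB_eq': "LB w u xt py = ereal (LBr w u (fst xt) (snd xt) (fst py) (snd py))"
  unfolding LB_def LBr_def by simp

lemma LBr_pert:
  "LBr w u (x + \<sigma> *\<^sub>R ee i j) (t + s *\<^sub>R eb i) p y = LBr w u x t p y - w$i * ln (t$i + s) + w$i * ln (t$i)
     + y$i * s + p$j * \<sigma> - y$i * (\<sigma> * u$i$j)"
proof -
  have a: "(\<Sum>k\<in>UNIV. w$k * ln ((t + s *\<^sub>R eb i)$k)) =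
        (\<Sum>k\<in>UNIV. w$k * ln (t$k) + (if k = i then w$i * ln (t$i + s) - w$i * ln (t$i) else 0))"
    by (intro sum.cong refl) auto
  have b: "(\<Sum>k\<in>UNIV. y$k * ((t + s *\<^sub>R eb i)$k - util u (x + \<sigma> *\<^sub>R ee i j) k)) =
        (\<Sum>k\<in>UNIV. y$k * (t$k - util u x k) + (if k = i then y$i * s - y$i * (\<sigma> * u$i$j) else 0))"
    unfolding util_ee by (intro sum.cong refl) (auto simp: right_diff_distrib distrib_left)
  show ?thesis unfolding LBr_def a b colterm_ee sum.distrib by simp
qed

lemma ln2_bounds: "1/2 \<le> ln (2::real)" "ln (2::real) \<le> 1"
proof -
  have "ln (1/2::real) \<le> 1/2 - 1" by (rule ln_le_minus_one) simp
  then show "1/2 \<le> ln (2::real)" by (simp add: ln_div)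
  have "ln (2::real) \<le> 2 - 1" by (rule ln_le_minus_one) simp
  then show "ln (2::real) \<le> 1" by simp
qed

lemma B_saddle:
  fixes xs :: "real^'m^'n" and ts ys :: "real^'n" and ps :: "real^'m" and w :: "real^'n" and u :: "real^'m^'n"
  assumes zs: "((xs, ts), (ps, ys)) \<in> saddle_points (LB w u) ZB"
  shows "\<forall>i j. 0 \<le> xs$i$j" "\<forall>i. ts$i > 0" "\<forall>j. (\<Sum>i\<in>UNIV. xs$i$j) = 1" "\<forall>i. ts$i = util u xs i"
    "\<forall>x t. (\<forall>i j. 0 \<le> x$i$j) \<longrightarrow> (\<forall>i. t$i > 0) \<longrightarrow> LBr w u xs ts ps ys \<le> LBr w u x t ps ys"
    "\<forall>q. LB w u (xs, ts) q = ereal (- (\<Sum>i\<in>UNIV. w $ i * ln (ts $ i)))"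
proof -
  have sp: "((xs, ts), (ps, ys)) \<in> ZB \<and> (\<forall>z\<in>ZB. LB w u (xs, ts) (snd z) \<le> LB w u (xs, ts) (ps, ys) \<and> LB w u (xs, ts) (ps, ys) \<le> LB w u (fst z) (ps, ys))"
    using zs unfolding saddle_points_def by simp
  have inZ: "((xs, ts), (ps, ys)) \<in> ZB" using sp by blast
  have S1: "LB w u (xs, ts) (snd z) \<le> LB w u (xs, ts) (ps, ys)" if "z \<in> ZB" for z :: "((real^'m^'n) \<times> (real^'n)) \<times> ((real^'m) \<times> (real^'n))"
    using sp that by blast
  have S2: "LB w u (xs, ts) (ps, ys) \<le> LB w u (fst z) (ps, ys)" if "z \<in> ZB" for z :: "((real^'m^'n) \<times> (real^'n)) \<times> ((real^'m) \<times> (real^'n))"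
    using sp that by blast
  show x0: "\<forall>i j. 0 \<le> xs$i$j" and t0: "\<forall>i. ts$i > 0" using inZ unfolding ZB_def by auto
  define c :: "real^'m" where "c = (\<chi> j. (\<Sum>i\<in>UNIV. xs$i$j) - 1)"
  define r :: "real^'n" where "r = (\<chi> i. ts$i - util u xs i)"
  have "((xs, ts), (ps + c, ys + r)) \<in> ZB" using x0 t0 unfolding ZB_def by simp
  then have "LB w u (xs, ts) (ps + c, ys + r) \<le> LB w u (xs, ts) (ps, ys)" using S1 by force
  then have "LBr w u xs ts (ps + c) (ys + r) \<le> LBr w u xs ts ps ys" by (simp add: LB_eq)
  moreover have "LBr w u xs ts (ps + c) (ys + r) = LBr w u xs ts ps ys + (\<Sum>j\<in>UNIV. (c$j)^2) + (\<Sum>i\<in>UNIV. (r$i)^2)"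
    unfolding LBr_def c_def r_def by (simp add: sum.distrib distrib_right power2_eq_square)
  ultimately have le: "(\<Sum>j\<in>UNIV. (c$j)^2) + (\<Sum>i\<in>UNIV. (r$i)^2) \<le> 0" by simp
  have n1: "(\<Sum>j\<in>UNIV. (c$j)^2) \<ge> 0" "(\<Sum>i\<in>UNIV. (r$i)^2) \<ge> 0" by (auto intro: sum_nonneg)
  then have "(\<Sum>j\<in>UNIV. (c$j)^2) = 0" "(\<Sum>i\<in>UNIV. (r$i)^2) = 0" using le by linarith+
  then have "\<forall>j. (c$j)^2 = 0" "\<forall>i. (r$i)^2 = 0"
    by (simp_all add: sum_nonneg_eq_0_iff)
  then show cs: "\<forall>j. (\<Sum>i\<in>UNIV. xs$i$j) = 1" and tsU: "\<forall>i. ts$i = util u xs i"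
    unfolding c_def r_def by simp_all
  show "\<forall>x t. (\<forall>i j. 0 \<le> x$i$j) \<longrightarrow> (\<forall>i. t$i > 0) \<longrightarrow> LBr w u xs ts ps ys \<le> LBr w u x t ps ys"
  proof (intro allI impI)
    fix x :: "real^'m^'n" and t :: "real^'n" assume "\<forall>i j. 0 \<le> x$i$j" "\<forall>i. t$i > 0"
    then have "((x, t), (ps, ys)) \<in> ZB" unfolding ZB_def by simp
    then have "LB w u (xs, ts) (ps, ys) \<le> LB w u (x, t) (ps, ys)" using S2 by force
    then show "LBr w u xs ts ps ys \<le> LBr w u x t ps ys" by (simp add: LB_eq)
  qed
  show "\<forall>q. LB w u (xs, ts) q = ereal (- (\<Sum>i\<in>UNIV. w $ i * ln (ts $ i)))"
    using cs tsU by (simp add: LB_eq' LBr_def)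
qed



lemma B_min_pert:
  fixes xs :: "real^'m^'n" and ts ys :: "real^'n" and ps :: "real^'m" and w :: "real^'n" and u :: "real^'m^'n"
  assumes mn: "\<forall>x t. (\<forall>i j. 0 \<le> x$i$j) \<longrightarrow> (\<forall>i. t$i > 0) \<longrightarrow> LBr w u xs ts ps ys \<le> LBr w u x t ps ys"
    and c1: "\<forall>a b. 0 \<le> (xs + \<sigma> *\<^sub>R ee i j)$a$b" and c2: "\<forall>k. (ts + s *\<^sub>R eb i)$k > 0"
  shows "0 \<le> - w$i * ln (ts$i + s) + w$i * ln (ts$i) + ys$i * s + ps$j * \<sigma> - ys$i * (\<sigma> * u$i$j)"
proof -
  have "LBr w u xs ts ps ys \<le> LBr w u (xs + \<sigma> *\<^sub>R ee i j) (ts + s *\<^sub>R eb i) ps ys"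
    using mn c1 c2 by blast
  then show ?thesis unfolding LBr_pert by simp
qed

lemma B_bounds:
  fixes xs :: "real^'m^'n" and ts ys :: "real^'n" and ps :: "real^'m" and w :: "real^'n" and u :: "real^'m^'n"
  assumes w0: "\<forall>i. w$i > 0" and x0: "\<forall>i j. 0 \<le> xs$i$j" and t0: "\<forall>i. ts$i > 0"
    and mn: "\<forall>x t. (\<forall>i j. 0 \<le> x$i$j) \<longrightarrow> (\<forall>i. t$i > 0) \<longrightarrow> LBr w u xs ts ps ys \<le> LBr w u x t ps ys"
  shows "w$i/2 \<le> ys$i * ts$i" "ys$i * ts$i \<le> 2 * w$i" "ys$i * u$i$j \<le> ps$j"
    "xs$i$j > 0 \<Longrightarrow> ps$j \<le> ys$i * u$i$j"
proof -
  have xs00: "\<forall>a b. 0 \<le> (xs + 0 *\<^sub>R ee i j)$a$b" using x0 by simp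
  have ts00: "\<forall>k. (ts + 0 *\<^sub>R eb i)$k > 0" using t0 by simp
  have ti: "ts$i > 0" using t0 by simp
  have c2a: "\<forall>k. (ts + (ts$i) *\<^sub>R eb i)$k > 0" using t0 by (simp add: add_pos_pos)
  have "0 \<le> - w$i * ln (ts$i + ts$i) + w$i * ln (ts$i) + ys$i * ts$i + ps$j * 0 - ys$i * (0 * u$i$j)"
    by (rule B_min_pert[OF mn xs00 c2a])
  moreover have "ln (ts$i + ts$i) = ln 2 + ln (ts$i)" using ti by (simp add: ln_mult mult_2[symmetric])
  ultimately have "w$i * ln 2 \<le> ys$i * ts$i" by (simp add: algebra_simps)
  moreover have "w$i * (1/2) \<le> w$i * ln 2" using ln2_bounds(1) w0 by (intro mult_left_mono) (auto simp: less_imp_le)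
  ultimately show "w$i/2 \<le> ys$i * ts$i" by simp
  have c2b: "\<forall>k. (ts + (- ts$i/2) *\<^sub>R eb i)$k > 0" using t0 by simp
  have "0 \<le> - w$i * ln (ts$i + - ts$i/2) + w$i * ln (ts$i) + ys$i * (- ts$i/2) + ps$j * 0 - ys$i * (0 * u$i$j)"
    by (rule B_min_pert[OF mn xs00 c2b])
  moreover have "ts$i + - ts$i/2 = ts$i/2" by simp
  ultimately have h: "ys$i * ts$i / 2 \<le> w$i * (ln (ts$i) - ln (ts$i/2))" by (simp add: algebra_simps)
  have "ln (ts$i/2) = ln (ts$i) - ln 2" using ti by (simp add: ln_div)
  then have "ln (ts$i) - ln (ts$i/2) = ln 2" by simp
  then have "ys$i * ts$i \<le> 2 * (w$i * ln 2)" using h by simp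
  moreover have "w$i * ln 2 \<le> w$i * 1" using ln2_bounds(2) w0 by (intro mult_left_mono) (auto simp: less_imp_le)
  ultimately show "ys$i * ts$i \<le> 2 * w$i" by simp
  have xs1: "\<forall>a b. 0 \<le> (xs + 1 *\<^sub>R ee i j)$a$b" using x0 by simp
  have "0 \<le> - w$i * ln (ts$i + 0) + w$i * ln (ts$i) + ys$i * 0 + ps$j * 1 - ys$i * (1 * u$i$j)"
    by (rule B_min_pert[OF mn xs1 ts00])
  then show "ys$i * u$i$j \<le> ps$j" by simp
  assume xp: "xs$i$j > 0"
  have xs2: "\<forall>a b. 0 \<le> (xs + (- xs$i$j) *\<^sub>R ee i j)$a$b" using x0 by simp
  have "0 \<le> - w$i * ln (ts$i + 0) + w$i * ln (ts$i) + ys$i * 0 + ps$j * (- xs$i$j) - ys$i * ((- xs$i$j) * u$i$j)"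
    by (rule B_min_pert[OF mn xs2 ts00])
  then have "xs$i$j * ps$j \<le> xs$i$j * (ys$i * u$i$j)" by (simp add: algebra_simps)
  then show "ps$j \<le> ys$i * u$i$j" using xp by simp
qed



lemma LBr_pert_t: "LBr w u x (t + s *\<^sub>R eb i) p y = LBr w u x t p y - w$i * ln (t$i + s) + w$i * ln (t$i) + y$i * s"
  using LBr_pert[of w u x 0 i undefined t s p y] by simp

lemma LBr_base:
  assumes cs: "\<forall>j. (\<Sum>i\<in>UNIV. xs$i$j) = 1" and tsU: "\<forall>i. ts$i = util u xs i"
  shows "LBr w u xs ts p y = - (\<Sum>i\<in>UNIV. w $ i * ln (ts $ i))"
  unfolding LBr_def using cs tsU by simp

lemma B_dual_p:
  fixes xs :: "real^'m^'n" and ts ys y :: "real^'n" and ps p :: "real^'m" and w :: "real^'n" and u :: "real^'m^'n"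
  assumes u0: "\<forall>i j. u $ i $ j \<ge> 0" and w0: "\<forall>i. w$i > 0"
    and x0: "\<forall>i j. 0 \<le> xs$i$j" and t0: "\<forall>i. ts$i > 0"
    and cs: "\<forall>j. (\<Sum>i\<in>UNIV. xs$i$j) = 1" and tsU: "\<forall>i. ts$i = util u xs i"
    and mn: "\<forall>x t. (\<forall>i j. 0 \<le> x$i$j) \<longrightarrow> (\<forall>i. t$i > 0) \<longrightarrow> LBr w u xs ts ps ys \<le> LBr w u x t ps ys"
    and big: "xs$i$j \<ge> 1 / real CARD('n)"
    and tau: "\<bar>\<tau>\<bar> \<le> 1 / (2 * real CARD('n))"
  shows "- (\<Sum>i\<in>UNIV. w $ i * ln (ts $ i)) - LBr w u (xs + \<tau> *\<^sub>R ee i j) (ts + (\<tau> * u$i$j) *\<^sub>R eb i) p y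
          \<ge> -(p$j - ps$j)*\<tau> - 2*w$i*(real CARD('n)*\<tau>)^2"
proof -
  define N where "N = real CARD('n)"
  have N: "N > 0" unfolding N_def by simp
  have up: "\<forall>i. util u xs i > 0" using t0 tsU by metis
  define U where "U = ts$i"
  define a where "a = u$i$j"
  have U: "U > 0" unfolding U_def using t0 by simp
  have UU: "U = util u xs i" unfolding U_def using tsU by simp
  have a: "a \<ge> 0" unfolding a_def using u0 by simp
  have tau': "\<bar>-\<tau>\<bar> \<le> 1 / (2 * real CARD('n))" using tau by simp
  have h1: "\<bar>\<tau> * a\<bar> \<le> U / 2" using A_pert_basic(1)[OF u0 x0 up big tau] unfolding UU a_def .
  have c1: "\<forall>a b. 0 \<le> (xs + (-\<tau>) *\<^sub>R ee i j)$a$b" using A_pert_basic(2)[OF u0 x0 up big tau'] .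
  have c2: "\<forall>k. (ts + ((-\<tau>) * u$i$j) *\<^sub>R eb i)$k > 0"
  proof
    fix k show "(ts + ((-\<tau>) * u$i$j) *\<^sub>R eb i)$k > 0"
    proof (cases "k = i")
      case True
      have "ts$i > 0" using t0 by simp
      moreover have "\<tau> * u$i$j \<le> \<bar>\<tau> * u$i$j\<bar>" by simp
      ultimately show ?thesis using True h1 unfolding U_def a_def by simp
    qed (use t0 in simp)
  qed
  have p2: "0 \<le> - w$i * ln (U + (-\<tau>) * a) + w$i * ln U + ys$i * ((-\<tau>) * a) + ps$j * (-\<tau>) - ys$i * ((-\<tau>) * a)"
    using B_min_pert[OF mn c1 c2] unfolding U_def a_def .
  have e1: "- (\<Sum>i\<in>UNIV. w $ i * ln (ts $ i)) - LBr w u (xs + \<tau> *\<^sub>R ee i j) (ts + (\<tau> * u$i$j) *\<^sub>R eb i) p y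
       = w$i * ln (U + \<tau> * a) - w$i * ln U - p$j * \<tau>"
    unfolding LBr_pert LBr_base[OF cs tsU] U_def a_def by (simp add: algebra_simps)
  have e2: "w$i * ln (U + \<tau> * a) - w$i * ln U - p$j * \<tau> \<ge> w$i * (ln (U + \<tau>*a) + ln (U - \<tau>*a) - 2 * ln U) - (p$j - ps$j) * \<tau>"
    using p2 by (simp add: algebra_simps)
  have e3: "ln (U + \<tau>*a) + ln (U - \<tau>*a) - 2 * ln U \<ge> - 2 * ((\<tau>*a)/U)^2"
    using U h1 by (intro ln_second) auto
  have e4: "((\<tau>*a)/U)^2 \<le> (N*\<tau>)^2"
  proof -
    have "a * xs$i$j \<le> U" unfolding UU a_def by (rule util_ge_term[OF u0 x0])
    have "a * (1/N) \<le> a * xs$i$j" using big a unfolding N_def by (intro mult_left_mono) auto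
    have "a = N * (a * (1/N))" using N by simp
    also have "\<dots> \<le> N * (a * xs$i$j)" by (rule mult_left_mono[OF \<open>a * (1/N) \<le> a * xs$i$j\<close>]) (use N in simp)
    also have "\<dots> \<le> N * U" by (rule mult_left_mono[OF \<open>a * xs$i$j \<le> U\<close>]) (use N in simp)
    finally have "a \<le> N * U" .
    then have "a / U \<le> N" using U by (simp add: field_simps)
    then have "\<bar>\<tau>\<bar> * (a/U) \<le> \<bar>\<tau>\<bar> * N" by (intro mult_left_mono) auto
    then have "\<bar>\<tau>*a/U\<bar> \<le> \<bar>\<tau>\<bar> * N" using a U by (simp add: abs_mult abs_div)
    then have "\<bar>\<tau>*a/U\<bar>^2 \<le> (\<bar>\<tau>\<bar> * N)^2" by (intro power_mono) auto
    moreover have "\<bar>\<tau>*a/U\<bar>^2 = ((\<tau>*a)/U)^2" by (simp only: power2_abs)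
    moreover have "(\<bar>\<tau>\<bar> * N)^2 = (N*\<tau>)^2" by (simp add: power_mult_distrib)
    ultimately show ?thesis by simp
  qed
  have "w$i * (- 2 * ((\<tau>*a)/U)^2) \<le> w$i * (ln (U + \<tau>*a) + ln (U - \<tau>*a) - 2 * ln U)"
    using e3 w0 by (intro mult_left_mono) (auto simp: less_imp_le)
  moreover have "w$i * (- 2 * (N*\<tau>)^2) \<le> w$i * (- 2 * ((\<tau>*a)/U)^2)"
  proof (rule mult_left_mono)
    show "- 2 * (N*\<tau>)^2 \<le> - 2 * ((\<tau>*a)/U)^2" using e4 by linarith
    show "0 \<le> w$i" using w0 less_imp_le by blast
  qed
  ultimately show ?thesis unfolding N_def[symmetric] using e1 e2 by linarith
qed

lemma B_dual_y:
  fixes xs :: "real^'m^'n" and ts ys y :: "real^'n" and ps p :: "real^'m" and w :: "real^'n" and u :: "real^'m^'n"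
  assumes w0: "\<forall>i. w$i > 0"
    and x0: "\<forall>i j. 0 \<le> xs$i$j" and t0: "\<forall>i. ts$i > 0"
    and cs: "\<forall>j. (\<Sum>i\<in>UNIV. xs$i$j) = 1" and tsU: "\<forall>i. ts$i = util u xs i"
    and mn: "\<forall>x t. (\<forall>i j. 0 \<le> x$i$j) \<longrightarrow> (\<forall>i. t$i > 0) \<longrightarrow> LBr w u xs ts ps ys \<le> LBr w u x t ps ys"
    and tau: "\<bar>\<tau>\<bar> \<le> ts$i / 2"
  shows "- (\<Sum>i\<in>UNIV. w $ i * ln (ts $ i)) - LBr w u xs (ts + \<tau> *\<^sub>R eb i) p y
          \<ge> -(y$i - ys$i)*\<tau> - 2*w$i*(\<tau>/ts$i)^2"
proof -
  define U where "U = ts$i"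
  have U: "U > 0" unfolding U_def using t0 by simp
  have c1: "\<forall>a b. 0 \<le> (xs + 0 *\<^sub>R ee i undefined)$a$b" using x0 by simp
  have c2: "\<forall>k. (ts + (-\<tau>) *\<^sub>R eb i)$k > 0"
  proof
    fix k show "(ts + (-\<tau>) *\<^sub>R eb i)$k > 0"
    proof (cases "k = i")
      case True
      have "ts$i > 0" using t0 by simp
      moreover have "\<tau> \<le> \<bar>\<tau>\<bar>" by simp
      ultimately show ?thesis using True tau by simp
    qed (use t0 in simp)
  qed
  have p2: "0 \<le> - w$i * ln (U + (-\<tau>)) + w$i * ln U + ys$i * (-\<tau>)"
    using B_min_pert[OF mn c1 c2] unfolding U_def by simp
  have e1: "- (\<Sum>i\<in>UNIV. w $ i * ln (ts $ i)) - LBr w u xs (ts + \<tau> *\<^sub>R eb i) p y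
       = w$i * ln (U + \<tau>) - w$i * ln U - y$i * \<tau>"
    unfolding LBr_pert_t LBr_base[OF cs tsU] U_def by (simp add: algebra_simps)
  have e2: "w$i * ln (U + \<tau>) - w$i * ln U - y$i * \<tau> \<ge> w$i * (ln (U + \<tau>) + ln (U - \<tau>) - 2 * ln U) - (y$i - ys$i) * \<tau>"
    using p2 by (simp add: algebra_simps)
  have e3: "ln (U + \<tau>) + ln (U - \<tau>) - 2 * ln U \<ge> - 2 * (\<tau>/U)^2"
    using U tau unfolding U_def by (intro ln_second) auto
  have "w$i * (- 2 * (\<tau>/U)^2) \<le> w$i * (ln (U + \<tau>) + ln (U - \<tau>) - 2 * ln U)"
    using e3 w0 by (intro mult_left_mono) (auto simp: less_imp_le)
  then show ?thesis using e1 e2 unfolding U_def by linarith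
qed

lemma B_primal:
  fixes xs x :: "real^'m^'n" and ts t ys :: "real^'n" and ps :: "real^'m" and w :: "real^'n" and u :: "real^'m^'n"
  assumes u0: "\<forall>i j. u $ i $ j \<ge> 0" and w0: "\<forall>i. w$i > 0"
    and x0: "\<forall>i j. 0 \<le> xs$i$j" and t0: "\<forall>i. ts$i > 0"
    and cs: "\<forall>j. (\<Sum>i\<in>UNIV. xs$i$j) = 1" and tsU: "\<forall>i. ts$i = util u xs i"
    and mn: "\<forall>x t. (\<forall>i j. 0 \<le> x$i$j) \<longrightarrow> (\<forall>i. t$i > 0) \<longrightarrow> LBr w u xs ts ps ys \<le> LBr w u x t ps ys"
    and y0: "\<forall>i j. 0 \<le> x$i$j" and tp: "\<forall>i. t$i > 0"
    and R: "R \<ge> 0" and tb: "\<forall>i. t$i \<le> R"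
    and K: "K = R + (\<Sum>a\<in>UNIV. \<Sum>b\<in>UNIV. u$a$b)" and wm: "\<forall>i. wmin \<le> w$i" "wmin > 0"
  shows "LBr w u x t ps ys - (- (\<Sum>i\<in>UNIV. w $ i * ln (ts $ i))) \<ge> (wmin / K^2) * (norm (t - ts))^2"
proof -
  define mid where "mid = (1/2) *\<^sub>R (x + xs)"
  define tm where "tm = (1/2) *\<^sub>R (t + ts)"
  have mid_nth: "mid$i$j = (x$i$j + xs$i$j)/2" for i j unfolding mid_def by simp
  have tm_nth: "tm$i = (t$i + ts$i)/2" for i unfolding tm_def by simp
  have um: "util u mid i = (util u x i + util u xs i)/2" for i
    unfolding util_def mid_nth by (simp add: sum.distrib sum_divide_distrib algebra_simps add_divide_distrib)
  have cm: "(\<Sum>i\<in>UNIV. mid$i$j) - 1 = ((\<Sum>i\<in>UNIV. x$i$j) - 1)/2" for j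
    unfolding mid_nth using cs by (simp add: sum.distrib sum_divide_distrib[symmetric] field_simps)
  have ym: "tm$i - util u mid i = (t$i - util u x i)/2" for i
    unfolding tm_nth um using tsU by (simp add: field_simps)
  have m0: "\<forall>i j. 0 \<le> mid$i$j" using x0 y0 unfolding mid_nth by (simp add: add_nonneg_nonneg)
  have mp: "\<forall>i. tm$i > 0" using t0 tp unfolding tm_nth by (simp add: add_pos_pos)
  have g: "LBr w u xs ts ps ys \<le> LBr w u mid tm ps ys" using mn m0 mp by blast
  have LBxs: "LBr w u xs ts ps ys = - (\<Sum>i\<in>UNIV. w $ i * ln (ts $ i))" by (rule LBr_base[OF cs tsU])
  have LBmid: "LBr w u mid tm ps ys = - (\<Sum>i\<in>UNIV. w $ i * ln (tm $ i))
      + (1/2) * (\<Sum>j\<in>UNIV. ps$j * ((\<Sum>i\<in>UNIV. x$i$j) - 1)) + (1/2) * (\<Sum>i\<in>UNIV. ys$i * (t$i - util u x i))"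
  proof -
    have "(\<Sum>j\<in>UNIV. ps$j * (((\<Sum>i\<in>UNIV. x$i$j) - 1)/2)) = (1/2) * (\<Sum>j\<in>UNIV. ps$j * ((\<Sum>i\<in>UNIV. x$i$j) - 1))"
      unfolding sum_distrib_left by (intro sum.cong) auto
    moreover have "(\<Sum>i\<in>UNIV. ys$i * ((t$i - util u x i)/2)) = (1/2) * (\<Sum>i\<in>UNIV. ys$i * (t$i - util u x i))"
      unfolding sum_distrib_left by (intro sum.cong) auto
    ultimately show ?thesis unfolding LBr_def cm ym by simp
  qed
  have key: "LBr w u x t ps ys - (- (\<Sum>i\<in>UNIV. w $ i * ln (ts $ i))) \<ge>
      (\<Sum>i\<in>UNIV. w$i * (- ln (t$i) - ln (ts$i) + 2 * ln ((t$i + ts$i)/2)))"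
  proof -
    have "(\<Sum>i\<in>UNIV. w$i * (- ln (t$i) - ln (ts$i) + 2 * ln ((t$i + ts$i)/2))) =
       - (\<Sum>i\<in>UNIV. w $ i * ln (t $ i)) - (\<Sum>i\<in>UNIV. w $ i * ln (ts $ i)) + 2 * (\<Sum>i\<in>UNIV. w $ i * ln (tm $ i))"
      unfolding tm_nth by (simp add: sum.distrib sum_distrib_left algebra_simps sum_subtractf sum_negf)
    then show ?thesis using g LBxs LBmid unfolding LBr_def by linarith
  qed
  also have "(\<Sum>i\<in>UNIV. w$i * (- ln (t$i) - ln (ts$i) + 2 * ln ((t$i + ts$i)/2))) \<ge>
      (\<Sum>i\<in>UNIV. (wmin / K^2) * (t$i - ts$i)^2)"
  proof (rule sum_mono)
    fix i
    define a where "a = t$i"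
    define b where "b = ts$i"
    have a: "a > 0" "b > 0" unfolding a_def b_def using t0 tp by auto
    have Us: "\<forall>i j. xs$i$j \<le> 1"
    proof (intro allI)
      fix i j
      have "xs$i$j \<le> (\<Sum>a\<in>UNIV. xs$a$j)" using x0 by (intro member_le_sum) auto
      then show "xs$i$j \<le> 1" using cs by simp
    qed
    have "a \<le> R" unfolding a_def using tb by simp
    moreover have "b \<le> (\<Sum>a\<in>UNIV. \<Sum>b\<in>UNIV. u$a$b) * 1" unfolding b_def using tsU util_le_bound[OF u0 Us] by simp
    ultimately have abK: "a + b \<le> K" unfolding K by simp
    have "(a+b)^2 \<le> K^2" using abK a by (intro power_mono) auto
    have Kpos: "K > 0" using abK a by simp
    have l: "- ln a - ln b + 2 * ln ((a+b)/2) \<ge> (a-b)^2/(a+b)^2" by (rule ln_mid[OF a])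
    have "(a-b)^2/K^2 \<le> (a-b)^2/(a+b)^2"
      using \<open>(a+b)^2 \<le> K^2\<close> a Kpos by (intro divide_left_mono) auto
    then have "wmin * ((a-b)^2/K^2) \<le> w$i * ((a-b)^2/(a+b)^2)"
      using wm w0 by (intro mult_mono) (auto simp: less_imp_le)
    also have "\<dots> \<le> w$i * (- ln a - ln b + 2 * ln ((a+b)/2))"
      using l w0 by (intro mult_left_mono) (auto simp: less_imp_le)
    finally show "(wmin / K^2) * (t$i - ts$i)^2 \<le> w$i * (- ln (t$i) - ln (ts$i) + 2 * ln ((t$i + ts$i)/2))"
      unfolding a_def b_def by simp
  qed
  also have "(\<Sum>i\<in>UNIV. (wmin / K^2) * (t$i - ts$i)^2) = (wmin / K^2) * (norm (t - ts))^2"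
    unfolding norm2_vec by (simp add: sum_distrib_left)
  finally show ?thesis .
qed



lemma LB_eq_transfer:
  fixes x xs :: "real^'m^'n"
  assumes "uvec u x = uvec u xs" "colsum x = colsum xs"
  shows "LB w u (x, t) = LB w u (xs, t)"
proof -
  have "util u x i = util u xs i" for i
  proof -
    have "(uvec u x)$i = (uvec u xs)$i" using assms(1) by simp
    then show ?thesis unfolding uvec_def by simp
  qed
  moreover have "(\<Sum>i\<in>UNIV. x$i$j) = (\<Sum>i\<in>UNIV. xs$i$j)" for j
  proof -
    have "(colsum x)$j = (colsum xs)$j" using assms(2) by simp
    then show ?thesis unfolding colsum_def by simp
  qed
  ultimately show ?thesis unfolding LB_def by (simp add: fun_eq_iff)
qed

lemma sq_tri: "(norm (a - c :: 'a::real_normed_vector))^2 \<le> 2 * (norm (a - b))^2 + 2 * (norm (b - c))^2"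
proof -
  have "a - c = (a - b) + (b - c)" by simp
  then have "norm (a - c) \<le> norm (a - b) + norm (b - c)" by (metis norm_triangle_ineq)
  then have "(norm (a - c))^2 \<le> (norm (a - b) + norm (b - c))^2" by (intro power_mono) auto
  also have "\<dots> = 2 * (norm (a - b))^2 + 2 * (norm (b - c))^2 - (norm (a - b) - norm (b - c))^2"
    by (simp add: power2_eq_square algebra_simps)
  also have "\<dots> \<le> 2 * (norm (a - b))^2 + 2 * (norm (b - c))^2" by simp
  finally show ?thesis .
qed



lemma max_coord:
  fixes f :: "'a::finite \<Rightarrow> real"
  shows "\<exists>k. \<forall>j. f j \<le> f k"
proof -
  have "Max (range f) \<in> range f" by (intro Max_in) auto
  then obtain k where k: "f k = Max (range f)" by (metis imageE)
  have "f j \<le> f k" for j unfolding k by (intro Max_ge) auto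
  then show ?thesis by blast
qed

lemma sum_sq_le:
  fixes v :: "real^'k"
  assumes "\<forall>j. \<bar>v$j\<bar> \<le> D"
  shows "(norm v)^2 \<le> real CARD('k) * D^2"
proof -
  have "(norm v)^2 = (\<Sum>j\<in>UNIV. (v$j)^2)" by (rule norm2_vec)
  also have "\<dots> \<le> (\<Sum>j\<in>(UNIV::'k set). D^2)"
  proof (rule sum_mono)
    fix j
    have "\<bar>v$j\<bar>^2 \<le> D^2" using assms by (intro power_mono) auto
    then show "(v$j)^2 \<le> D^2" by simp
  qed
  also have "\<dots> = real CARD('k) * D^2" by simp
  finally show ?thesis .
qed

lemma B_dual_exists:
  fixes xs :: "real^'m^'n" and ts ys y :: "real^'n" and ps p :: "real^'m" and w :: "real^'n" and u :: "real^'m^'n"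
  assumes u0: "\<forall>i j. u $ i $ j \<ge> 0" and w0: "\<forall>i. w$i > 0"
    and x0: "\<forall>i j. 0 \<le> xs$i$j" and t0: "\<forall>i. ts$i > 0"
    and cs: "\<forall>j. (\<Sum>i\<in>UNIV. xs$i$j) = 1" and tsU: "\<forall>i. ts$i = util u xs i"
    and mn: "\<forall>x t. (\<forall>i j. 0 \<le> x$i$j) \<longrightarrow> (\<forall>i. t$i > 0) \<longrightarrow> LBr w u xs ts ps ys \<le> LBr w u x t ps ys"
    and xi: "\<xi> > 0"
    and psb: "\<forall>j. \<bar>ps$j\<bar> \<le> Pb" and ysb: "\<forall>i. \<bar>ys$i\<bar> \<le> Yb" and tlo: "\<forall>i. ts$i \<ge> tlo" "tlo > 0"
    and pb: "\<forall>j. \<bar>p$j\<bar> \<le> R" and yb: "\<forall>i. \<bar>y$i\<bar> \<le> R"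
    and ubd: "\<forall>i j. u$i$j \<le> Us" and wle: "\<forall>i. w$i \<le> W"
    and eta: "eta > 0" and eta1: "eta * (2 * real CARD('n) * (R + Pb + 1)) \<le> 1"
    and eta2: "eta * (4 * W * (real CARD('n))^2 + \<xi> * (1 + Us^2)) \<le> 1"
    and eta3: "eta * (2 * (R + Yb + 1)) \<le> tlo" and eta4: "eta * (4 * W / tlo^2 + \<xi>) \<le> 1"
  shows "\<exists>xh th d. (\<forall>i j. 0 \<le> xh$i$j) \<and> (\<forall>i. th$i > 0) \<and>
     - (\<Sum>i\<in>UNIV. w $ i * ln (ts $ i)) - LBr w u xh th p y - \<xi>/2 * ((norm (xh - xs))^2 + (norm (th - ts))^2) \<ge> eta * d^2 / 2 \<and>
     (norm (p - ps))^2 + (norm (y - ys))^2 \<le> (real CARD('m) + real CARD('n)) * d^2"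
proof -
  define N where "N = real CARD('n)"
  have N: "N > 0" unfolding N_def by simp
  have up: "\<forall>i. util u xs i > 0" using t0 tsU by metis
  obtain jm where jm: "\<forall>j. \<bar>p$j - ps$j\<bar> \<le> \<bar>p$jm - ps$jm\<bar>" using max_coord[of "\<lambda>j. \<bar>p$j - ps$j\<bar>"] by blast
  obtain iy where iy: "\<forall>i. \<bar>y$i - ys$i\<bar> \<le> \<bar>y$iy - ys$iy\<bar>" using max_coord[of "\<lambda>i. \<bar>y$i - ys$i\<bar>"] by blast
  show ?thesis
  proof (cases "\<bar>y$iy - ys$iy\<bar> \<le> \<bar>p$jm - ps$jm\<bar>")
    case True
    define d where "d = p$jm - ps$jm"
    obtain im where im: "xs$im$jm \<ge> 1 / real CARD('n)" using pigeon cs by blast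
    define \<tau> where "\<tau> = - eta * d"
    have dB: "\<bar>d\<bar> \<le> R + Pb" unfolding d_def using pb[rule_format, of jm] psb[rule_format, of jm] by linarith
    have tb: "\<bar>\<tau>\<bar> \<le> 1 / (2 * real CARD('n))"
    proof -
      have "\<bar>\<tau>\<bar> = eta * \<bar>d\<bar>" unfolding \<tau>_def using eta by (simp add: abs_mult)
      also have "\<dots> \<le> eta * (R + Pb + 1)" using dB eta by (intro mult_left_mono) auto
      also have "\<dots> \<le> 1 / (2 * N)" using eta1 N unfolding N_def[symmetric] by (simp add: field_simps)
      finally show ?thesis unfolding N_def .
    qed
    define xh where "xh = xs + \<tau> *\<^sub>R ee im jm"
    define th where "th = ts + (\<tau> * u$im$jm) *\<^sub>R eb im"
    have xh0: "\<forall>i j. 0 \<le> xh$i$j" unfolding xh_def using A_pert_basic(2)[OF u0 x0 up im tb] by blast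
    have h1: "\<bar>\<tau> * u$im$jm\<bar> \<le> ts$im / 2" using A_pert_basic(1)[OF u0 x0 up im tb] tsU by simp
    have th0: "\<forall>i. th$i > 0"
    proof
      fix k show "th$k > 0"
      proof (cases "k = im")
        case True
        have "ts$im > 0" using t0 by simp
        moreover have "- (\<tau> * u$im$jm) \<le> \<bar>\<tau> * u$im$jm\<bar>" by simp
        ultimately show ?thesis using True h1 by (simp add: th_def)
      qed (use t0 in \<open>simp add: th_def\<close>)
    qed
    have dual: "- (\<Sum>i\<in>UNIV. w $ i * ln (ts $ i)) - LBr w u xh th p y \<ge> -(p$jm - ps$jm)*\<tau> - 2*w$im*(N*\<tau>)^2"
      unfolding xh_def th_def N_def using B_dual_p[OF u0 w0 x0 t0 cs tsU mn im tb] .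
    have "xh - xs = \<tau> *\<^sub>R ee im jm" unfolding xh_def by simp
    then have nxh: "(norm (xh - xs))^2 = \<tau>^2" by (simp only: norm_ee_scale power2_abs)
    have "th - ts = (\<tau> * u$im$jm) *\<^sub>R eb im" unfolding th_def by simp
    then have "(norm (th - ts))^2 = (\<tau> * u$im$jm)^2" by (simp only: norm_eb_scale power2_abs)
    then have nth: "(norm (th - ts))^2 = \<tau>^2 * (u$im$jm)^2" by (simp add: power_mult_distrib)
    have usq: "(u$im$jm)^2 \<le> Us^2" using u0 ubd by (intro power_mono) auto
    have main: "- (\<Sum>i\<in>UNIV. w $ i * ln (ts $ i)) - LBr w u xh th p y - \<xi>/2 * ((norm (xh - xs))^2 + (norm (th - ts))^2) \<ge> eta * d^2 / 2"
    proof -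
      have "\<xi>/2 * ((norm (xh - xs))^2 + (norm (th - ts))^2) = \<xi>/2 * (\<tau>^2 * (1 + (u$im$jm)^2))"
        unfolding nxh nth by (simp add: algebra_simps)
      also have "\<dots> \<le> \<xi>/2 * (\<tau>^2 * (1 + Us^2))" using usq xi by (intro mult_left_mono) auto
      finally have pen: "\<xi>/2 * ((norm (xh - xs))^2 + (norm (th - ts))^2) \<le> \<xi>/2 * (\<tau>^2 * (1 + Us^2))" .
      have e0: "-(p$jm - ps$jm)*\<tau> = eta * d^2" unfolding \<tau>_def d_def by (simp add: power2_eq_square algebra_simps)
      have e: "-(p$jm - ps$jm)*\<tau> - 2*w$im*(N*\<tau>)^2 - \<xi>/2 * (\<tau>^2 * (1 + Us^2))
           = eta * d^2 - eta^2 * d^2 * (2*w$im*N^2 + \<xi>/2 * (1 + Us^2))"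
        unfolding e0 unfolding \<tau>_def by (simp add: power2_eq_square field_simps)
      have "eta * (2*w$im*N^2 + \<xi>/2 * (1 + Us^2)) \<le> 1/2"
      proof -
        have "2*w$im*N^2 \<le> 2*W*N^2" using wle by (simp add: mult_right_mono)
        then have "eta * (2*w$im*N^2 + \<xi>/2 * (1 + Us^2)) \<le> eta * (2*W*N^2 + \<xi>/2 * (1 + Us^2))"
          using eta by (intro mult_left_mono) auto
        also have "\<dots> = (eta * (4 * W * N^2 + \<xi> * (1 + Us^2)))/2" by (simp add: algebra_simps)
        finally show ?thesis using eta2 unfolding N_def by linarith
      qed
      then have "eta^2 * d^2 * (2*w$im*N^2 + \<xi>/2 * (1 + Us^2)) \<le> eta * d^2 * (1/2)"
      proof -
        assume a: "eta * (2*w$im*N^2 + \<xi>/2 * (1 + Us^2)) \<le> 1/2"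
        have "eta^2 * d^2 * (2*w$im*N^2 + \<xi>/2 * (1 + Us^2)) = (eta * d^2) * (eta * (2*w$im*N^2 + \<xi>/2 * (1 + Us^2)))"
          by (simp add: power2_eq_square algebra_simps)
        also have "\<dots> \<le> (eta * d^2) * (1/2)" using a eta by (intro mult_left_mono) auto
        finally show ?thesis .
      qed
      then show ?thesis using dual e pen by linarith
    qed
    have np: "(norm (p - ps))^2 \<le> real CARD('m) * d^2"
      using sum_sq_le[of "p - ps" "\<bar>d\<bar>"] jm unfolding d_def by simp
    have ny: "(norm (y - ys))^2 \<le> real CARD('n) * d^2"
    proof -
      have "\<forall>j. \<bar>(y - ys)$j\<bar> \<le> \<bar>d\<bar>" using iy True unfolding d_def by (metis order_trans vector_minus_component)
      from sum_sq_le[OF this] show ?thesis by simp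
    qed
    have "(norm (p - ps))^2 + (norm (y - ys))^2 \<le> (real CARD('m) + real CARD('n)) * d^2"
      using np ny by (simp add: distrib_right)
    then show ?thesis using xh0 th0 main by blast
  next
    case False
    define d where "d = y$iy - ys$iy"
    define \<tau> where "\<tau> = - eta * d"
    have dB: "\<bar>d\<bar> \<le> R + Yb" unfolding d_def using yb[rule_format, of iy] ysb[rule_format, of iy] by linarith
    have tsl: "ts$iy \<ge> tlo" using tlo by simp
    have tb: "\<bar>\<tau>\<bar> \<le> ts$iy / 2"
    proof -
      have "\<bar>\<tau>\<bar> = eta * \<bar>d\<bar>" unfolding \<tau>_def using eta by (simp add: abs_mult)
      also have "\<dots> \<le> eta * (R + Yb + 1)" using dB eta by (intro mult_left_mono) auto
      also have "\<dots> \<le> tlo / 2" using eta3 by (simp add: algebra_simps)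
      finally show ?thesis using tsl by simp
    qed
    define th where "th = ts + \<tau> *\<^sub>R eb iy"
    have th0: "\<forall>i. th$i > 0"
    proof
      fix k show "th$k > 0"
      proof (cases "k = iy")
        case True
        have "ts$iy > 0" using t0 by simp
        moreover have "- \<tau> \<le> \<bar>\<tau>\<bar>" by simp
        ultimately show ?thesis using True tb by (simp add: th_def)
      qed (use t0 in \<open>simp add: th_def\<close>)
    qed
    have dual: "- (\<Sum>i\<in>UNIV. w $ i * ln (ts $ i)) - LBr w u xs th p y \<ge> -(y$iy - ys$iy)*\<tau> - 2*w$iy*(\<tau>/ts$iy)^2"
      unfolding th_def using B_dual_y[OF w0 x0 t0 cs tsU mn tb] .
    have "th - ts = \<tau> *\<^sub>R eb iy" unfolding th_def by simp
    then have nth: "(norm (th - ts))^2 = \<tau>^2" by (simp only: norm_eb_scale power2_abs)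
    have main: "- (\<Sum>i\<in>UNIV. w $ i * ln (ts $ i)) - LBr w u xs th p y - \<xi>/2 * ((norm (xs - xs))^2 + (norm (th - ts))^2) \<ge> eta * d^2 / 2"
    proof -
      have tsp: "ts$iy > 0" using t0 by simp
      have "2*w$iy*(\<tau>/ts$iy)^2 = \<tau>^2 * (2*w$iy/(ts$iy)^2)" by (simp add: power_divide)
      also have "\<dots> \<le> \<tau>^2 * (2*W/tlo^2)"
      proof (rule mult_left_mono)
        have "(tlo)^2 \<le> (ts$iy)^2" using tlo tsl by (intro power_mono) auto
        then have "2*w$iy/(ts$iy)^2 \<le> 2*w$iy/tlo^2" using w0 tlo tsp by (intro divide_left_mono) (auto simp: less_imp_le)
        also have "\<dots> \<le> 2*W/tlo^2" using wle tlo by (intro divide_right_mono) auto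
        finally show "2*w$iy/(ts$iy)^2 \<le> 2*W/tlo^2" .
      qed simp
      finally have q: "2*w$iy*(\<tau>/ts$iy)^2 \<le> \<tau>^2 * (2*W/tlo^2)" .
      have e0: "-(y$iy - ys$iy)*\<tau> = eta * d^2" unfolding \<tau>_def d_def by (simp add: power2_eq_square algebra_simps)
      have eg: "eta * d^2 - \<tau>^2 * c - \<xi>/2 * \<tau>^2 = eta * d^2 - eta^2 * d^2 * (c + \<xi>/2)" for c
        unfolding \<tau>_def by (simp add: power2_eq_square field_simps)
      have e: "-(y$iy - ys$iy)*\<tau> - \<tau>^2 * (2*W/tlo^2) - \<xi>/2 * \<tau>^2
           = eta * d^2 - eta^2 * d^2 * (2*W/tlo^2 + \<xi>/2)"
        unfolding e0 by (rule eg)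
      have "eta * (2*W/tlo^2 + \<xi>/2) \<le> 1/2"
      proof -
        have eq: "eta * (2*W/tlo^2 + \<xi>/2) = (eta * (4 * W / tlo^2 + \<xi>))/2" by (simp add: algebra_simps)
        have "(eta * (4 * W / tlo^2 + \<xi>))/2 \<le> 1/2" using eta4 by (intro divide_right_mono) auto
        then show ?thesis unfolding eq .
      qed
      then have "eta^2 * d^2 * (2*W/tlo^2 + \<xi>/2) \<le> eta * d^2 * (1/2)"
      proof -
        assume a: "eta * (2*W/tlo^2 + \<xi>/2) \<le> 1/2"
        have "eta^2 * d^2 * (2*W/tlo^2 + \<xi>/2) = (eta * d^2) * (eta * (2*W/tlo^2 + \<xi>/2))"
          by (simp add: power2_eq_square algebra_simps)
        also have "\<dots> \<le> (eta * d^2) * (1/2)" using a eta by (intro mult_left_mono) auto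
        finally show ?thesis .
      qed
      then show ?thesis using dual e q nth by simp
    qed
    have np: "(norm (p - ps))^2 \<le> real CARD('m) * d^2"
    proof -
      have "\<forall>j. \<bar>(p - ps)$j\<bar> \<le> \<bar>d\<bar>" using jm False unfolding d_def
        by (metis order_trans vector_minus_component linear)
      from sum_sq_le[OF this] show ?thesis by simp
    qed
    have ny: "(norm (y - ys))^2 \<le> real CARD('n) * d^2"
      using sum_sq_le[of "y - ys" "\<bar>d\<bar>"] iy unfolding d_def by simp
    have "(norm (p - ps))^2 + (norm (y - ys))^2 \<le> (real CARD('m) + real CARD('n)) * d^2"
      using np ny by (simp add: distrib_right)
    then show ?thesis using x0 th0 main by blast
  qed
qed



lemma dist4: "(dist ((x::'a::real_normed_vector, t::'b::real_normed_vector), (p::'c::real_normed_vector, y::'d::real_normed_vector)) ((x', t'), (p', y')))^2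
   = (norm (x - x'))^2 + (norm (t - t'))^2 + (norm (p - p'))^2 + (norm (y - y'))^2"
  unfolding dist_Pair_Pair by (simp add: dist_norm)

lemma partB:
  fixes w :: "real^'n" and u :: "real^'m^'n"
  assumes w_pos: "\<forall>i. w $ i > 0"
    and u0: "\<forall>i j. u $ i $ j \<ge> 0"
    and rows: "\<forall>i. \<exists>j. u $ i $ j > 0"
  shows "\<forall>\<xi>>0. \<forall>S. S \<subseteq> ZB \<and> bounded S \<longrightarrow>
            (\<exists>\<alpha>>0. \<forall>zs\<in>saddle_points (LB w u) ZB. \<forall>z\<in>S.
               Gsm (LB w u) ZB \<xi> z zs \<ge> ereal (\<alpha> * (infdist z (saddle_points (LB w u) ZB))\<^sup>2))"
proof (intro allI impI)
  fix \<xi> :: real and S :: "(((real^'m^'n) \<times> (real^'n)) \<times> ((real^'m) \<times> (real^'n))) set"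
  assume xi: "\<xi> > 0" and SS: "S \<subseteq> ZB \<and> bounded S"
  obtain R where R: "R > 0" "\<forall>z\<in>S. norm z \<le> R" using SS bounded_pos by blast
  obtain H where H: "H \<ge> 0" "\<forall>x xs. (\<forall>i j. 0 \<le> x$i$j) \<longrightarrow> (\<forall>i j. 0 \<le> xs$i$j) \<longrightarrow>
     (\<exists>x'. (\<forall>i j. 0 \<le> x'$i$j) \<and> colsum x' = colsum xs \<and> uvec u x' = uvec u xs \<and>
        norm (x - x') \<le> H * norm (Mop u x - Mop u xs))"
    using hoffman_market[of u] by blast
  define N where "N = real CARD('n)"
  define Mc where "Mc = real CARD('m)"
  define W where "W = (\<Sum>i\<in>UNIV. w$i)"
  define wmin where "wmin = Min (range (\<lambda>i. w$i))"
  define Us where "Us = (\<Sum>a\<in>UNIV. \<Sum>b\<in>UNIV. u$a$b)"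
  define mu where "mu = Min (range (\<lambda>i. Max (range (\<lambda>j. u$i$j))))"
  define Y where "Y = 2 * N * W / mu"
  define tlo where "tlo = wmin / (2 * Y)"
  define Pb where "Pb = 2 * N * W"
  define Kb where "Kb = R + Us"
  define c1 where "c1 = wmin / Kb^2"
  define Den where "Den = 2 * N * (R + Pb + 1) + (4 * W * N^2 + \<xi> * (1 + Us^2)) + 2 * (R + Y + 1) / tlo + (4 * W / tlo^2 + \<xi>)"
  define eta where "eta = 1 / Den"
  define Hb where "Hb = 2 * H + 1"
  define Mt where "Mt = Mc + N"
  define \<alpha> where "\<alpha> = min c1 (min (1/(2*\<xi>)) (eta/(2*Mt))) / (Hb^2 + 1)"
  have N: "N > 0" unfolding N_def by simp
  have Mc: "Mc > 0" unfolding Mc_def by simp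
  have Mt: "Mt > 0" unfolding Mt_def using N Mc by simp
  have wle: "w$i \<le> W" for i unfolding W_def using w_pos
    by (intro member_le_sum) (auto simp: less_imp_le)
  have W: "W > 0" using wle[of undefined] w_pos[rule_format, of undefined] by linarith
  have wm: "\<forall>i. wmin \<le> w$i" "wmin > 0" unfolding wmin_def using w_pos by auto
  have ule: "u$i$j \<le> Us" for i j
  proof -
    have "u$i$j \<le> (\<Sum>b\<in>UNIV. u$i$b)" using u0 by (intro member_le_sum) auto
    also have "\<dots> \<le> Us" unfolding Us_def using u0
      by (intro member_le_sum[of i UNIV "\<lambda>a. \<Sum>b\<in>UNIV. u$a$b"]) (auto intro: sum_nonneg)
    finally show ?thesis .
  qed
  have Us0: "Us \<ge> 0" using ule[of undefined undefined] u0 by (meson order_trans)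
  have rowmax: "\<exists>j. u$i$j \<ge> mu \<and> u$i$j > 0" for i
  proof -
    obtain j where j: "\<forall>k. u$i$k \<le> u$i$j" using max_coord[of "\<lambda>k. u$i$k"] by blast
    have "Max (range (\<lambda>k. u$i$k)) = u$i$j"
      by (rule Max_eqI) (use j in auto)
    moreover have "mu \<le> Max (range (\<lambda>k. u$i$k))" unfolding mu_def by (intro Min_le) auto
    moreover obtain j0 where "u$i$j0 > 0" using rows by blast
    ultimately show ?thesis using j by (metis less_le_trans)
  qed
  have mu: "mu > 0"
  proof -
    have "mu \<in> range (\<lambda>i. Max (range (\<lambda>j. u$i$j)))" unfolding mu_def by (intro Min_in) auto
    then obtain i where i: "mu = Max (range (\<lambda>j. u$i$j))" by auto
    obtain j where "u$i$j > 0" using rows by blast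
    moreover have "u$i$j \<le> Max (range (\<lambda>j. u$i$j))" by (intro Max_ge) auto
    ultimately show ?thesis using i by linarith
  qed
  have Y: "Y > 0" unfolding Y_def using N W mu by simp
  have tlo: "tlo > 0" unfolding tlo_def using wm Y by simp
  have Pb: "Pb \<ge> 0" unfolding Pb_def using N W by simp
  have Kb: "Kb > 0" unfolding Kb_def using R Us0 by simp
  have c1: "c1 > 0" unfolding c1_def using wm Kb by simp
  have t1: "2 * N * (R + Pb + 1) \<ge> 0" using N R Pb by simp
  have t2: "4 * W * N^2 + \<xi> * (1 + Us^2) \<ge> 0" using W xi by (simp add: add_nonneg_nonneg)
  have t3: "2 * (R + Y + 1) / tlo \<ge> 0" using R Y tlo by simp
  have t4: "4 * W / tlo^2 + \<xi> \<ge> 0" using W xi tlo by simp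
  have t4': "4 * W / tlo^2 + \<xi> > 0" using W xi tlo by (simp add: add_nonneg_pos)
  have den: "Den > 0" unfolding Den_def using t1 t2 t3 t4' by linarith
  have eta: "eta > 0" unfolding eta_def using den by simp
  have le1: "X \<le> Den \<Longrightarrow> eta * X \<le> 1" for X unfolding eta_def using den by (simp add: pos_divide_le_eq)
  have eta1: "eta * (2 * real CARD('n) * (R + Pb + 1)) \<le> 1"
    using le1 t1 t2 t3 t4 unfolding Den_def N_def by (smt (verit))
  have eta2: "eta * (4 * W * (real CARD('n))^2 + \<xi> * (1 + Us^2)) \<le> 1"
    using le1 t1 t2 t3 t4 unfolding Den_def N_def by (smt (verit))
  have eta3: "eta * (2 * (R + Y + 1)) \<le> tlo"
  proof -
    have "eta * (2 * (R + Y + 1) / tlo) \<le> 1" using le1 t1 t2 t3 t4 unfolding Den_def by (smt (verit))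
    then show ?thesis using tlo by (simp add: field_simps)
  qed
  have eta4: "eta * (4 * W / tlo^2 + \<xi>) \<le> 1"
    using le1 t1 t2 t3 t4 unfolding Den_def by (smt (verit))
  have Hb: "Hb \<ge> 0" unfolding Hb_def using H by simp
  have alpha: "\<alpha> > 0"
  proof -
    have hp: "Hb^2 + 1 > 0" by (metis add_pos_nonneg zero_less_one zero_le_power2 add.commute)
    have "min c1 (min (1/(2*\<xi>)) (eta/(2*Mt))) > 0" using c1 xi eta Mt by simp
    then show ?thesis unfolding \<alpha>_def using hp by simp
  qed
  show "\<exists>\<alpha>>0. \<forall>zs\<in>saddle_points (LB w u) ZB. \<forall>z\<in>S.
               Gsm (LB w u) ZB \<xi> z zs \<ge> ereal (\<alpha> * (infdist z (saddle_points (LB w u) ZB))\<^sup>2)"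
  proof (intro exI[of _ \<alpha>] conjI alpha ballI)
    fix zs z assume zsS: "zs \<in> saddle_points (LB w u) ZB" and zS: "z \<in> S"
    obtain xs ts ps ys where zs: "zs = ((xs, ts), (ps, ys))" by (metis prod.collapse)
    obtain x t p y where z: "z = ((x, t), (p, y))" by (metis prod.collapse)
    note sad = B_saddle[OF zsS[unfolded zs]]
    have x0: "\<forall>i j. 0 \<le> xs$i$j" and t0: "\<forall>i. ts$i > 0" and cs: "\<forall>j. (\<Sum>i\<in>UNIV. xs$i$j) = 1"
      and tsU: "\<forall>i. ts$i = util u xs i"
      and mn: "\<forall>x t. (\<forall>i j. 0 \<le> x$i$j) \<longrightarrow> (\<forall>i. t$i > 0) \<longrightarrow> LBr w u xs ts ps ys \<le> LBr w u x t ps ys"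
      using sad by blast+
    note bds = B_bounds[OF w_pos x0 t0 mn]
    have ysp: "ys$i > 0" for i
    proof (rule ccontr)
      assume "\<not> ys$i > 0"
      then have "ys$i * ts$i \<le> 0" using t0 by (simp add: mult_nonpos_nonneg less_imp_le)
      then show False using bds(1)[of i] w_pos by (smt (verit) divide_pos_pos)
    qed
    have psle: "ps$j \<le> Pb" for j
    proof -
      obtain i where i: "xs$i$j \<ge> 1 / real CARD('n)" using pigeon cs by blast
      have xp: "xs$i$j > 0" using i by (smt (verit) N N_def divide_pos_pos)
      have "u$i$j * xs$i$j \<le> ts$i" using util_ge_term[OF u0 x0] tsU by simp
      moreover have "u$i$j * (1/N) \<le> u$i$j * xs$i$j" using i u0 unfolding N_def by (intro mult_left_mono) auto
      ultimately have "u$i$j \<le> N * (u$i$j * xs$i$j)" "N * (u$i$j * xs$i$j) \<le> N * ts$i"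
        using N by (simp_all add: field_simps)
      then have "u$i$j \<le> N * ts$i" by linarith
      then have "ys$i * u$i$j \<le> ys$i * (N * ts$i)" using ysp[of i] by (intro mult_left_mono) (auto simp: less_imp_le)
      also have "\<dots> = N * (ys$i * ts$i)" by simp
      also have "\<dots> \<le> N * (2 * w$i)" using bds(2)[of i] N by (intro mult_left_mono) auto
      also have "\<dots> \<le> N * (2 * W)" using wle[of i] N by (intro mult_left_mono) auto
      finally show ?thesis using bds(4)[OF xp] unfolding Pb_def by simp
    qed
    have ps0: "ps$j \<ge> 0" for j
    proof -
      have "0 \<le> ys$undefined * u$undefined$j" using ysp u0 by (simp add: less_imp_le)
      then show ?thesis using bds(3)[of undefined j] by linarith
    qed
    have ysle: "ys$i \<le> Y" for i
    proof -
      obtain j where j: "u$i$j \<ge> mu" "u$i$j > 0" using rowmax by blast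
      have "ys$i * mu \<le> ys$i * u$i$j" using j ysp[of i] by (intro mult_left_mono) (auto simp: less_imp_le)
      also have "\<dots> \<le> Pb" using bds(3)[of i j] psle[of j] by simp
      finally have "ys$i * mu \<le> 2 * N * W" unfolding Pb_def .
      then show ?thesis unfolding Y_def using mu by (simp add: field_simps)
    qed
    have tslow: "\<forall>i. ts$i \<ge> tlo"
    proof
      fix i
      have "wmin / 2 \<le> w$i / 2" using wm by simp
      also have "\<dots> \<le> ys$i * ts$i" by (rule bds(1))
      also have "\<dots> \<le> Y * ts$i" using ysle[of i] t0 by (intro mult_right_mono) (auto simp: less_imp_le)
      finally show "ts$i \<ge> tlo" unfolding tlo_def using Y by (simp add: field_simps)
    qed
    have psb: "\<forall>j. \<bar>ps$j\<bar> \<le> Pb" using psle ps0 by simp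
    have ysb: "\<forall>i. \<bar>ys$i\<bar> \<le> Y" using ysle ysp by (simp add: less_imp_le)
    have zZ: "z \<in> ZB" using zS SS by blast
    have y0: "\<forall>i j. 0 \<le> x$i$j" and tp: "\<forall>i. t$i > 0" using zZ unfolding z ZB_def by auto
    have nz: "norm z \<le> R" using R zS by blast
    have nxt: "norm (x, t) \<le> R" using nz unfolding z by (meson norm_fst_le order_trans)
    have npy: "norm (p, y) \<le> R" using nz unfolding z by (meson norm_snd_le order_trans)
    have xb: "\<forall>i j. x$i$j \<le> R"
    proof (intro allI)
      fix i j
      have "x$i$j \<le> \<bar>x$i$j\<bar>" by simp
      also have "\<dots> \<le> norm (x$i)" by (rule component_le_norm_cart)
      also have "\<dots> \<le> norm x" by (rule Finite_Cartesian_Product.norm_nth_le)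
      also have "\<dots> \<le> norm (x, t)" by (rule norm_fst_le)
      finally show "x$i$j \<le> R" using nxt by simp
    qed
    have tb: "\<forall>i. t$i \<le> R"
    proof
      fix i
      have "t$i \<le> \<bar>t$i\<bar>" by simp
      also have "\<dots> \<le> norm t" by (rule component_le_norm_cart)
      also have "\<dots> \<le> norm (x, t)" by (rule norm_snd_le)
      finally show "t$i \<le> R" using nxt by simp
    qed
    have pb: "\<forall>j. \<bar>p$j\<bar> \<le> R"
    proof
      fix j
      have "\<bar>p$j\<bar> \<le> norm p" by (rule component_le_norm_cart)
      also have "\<dots> \<le> norm (p, y)" by (rule norm_fst_le)
      finally show "\<bar>p$j\<bar> \<le> R" using npy by simp
    qed
    have yb: "\<forall>i. \<bar>y$i\<bar> \<le> R"
    proof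
      fix i
      have "\<bar>y$i\<bar> \<le> norm y" by (rule component_le_norm_cart)
      also have "\<dots> \<le> norm (p, y)" by (rule norm_snd_le)
      finally show "\<bar>y$i\<bar> \<le> R" using npy by simp
    qed
    obtain xh th d where dx: "\<forall>i j. 0 \<le> xh$i$j" "\<forall>i. th$i > 0"
      "- (\<Sum>i\<in>UNIV. w $ i * ln (ts $ i)) - LBr w u xh th p y - \<xi>/2 * ((norm (xh - xs))^2 + (norm (th - ts))^2) \<ge> eta * d^2 / 2"
      "(norm (p - ps))^2 + (norm (y - ys))^2 \<le> (real CARD('m) + real CARD('n)) * d^2"
    proof -
      have ule': "\<forall>i j. u$i$j \<le> Us" using ule by blast
      have wle': "\<forall>i. w$i \<le> W" using wle by blast
      show ?thesis using B_dual_exists[OF u0 w_pos x0 t0 cs tsU mn xi psb ysb tslow tlo pb yb ule' wle' eta eta1 eta2 eta3 eta4]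
        that by blast
    qed
    have primal: "LBr w u x t ps ys - (- (\<Sum>i\<in>UNIV. w $ i * ln (ts $ i))) \<ge> c1 * (norm (t - ts))^2"
      unfolding c1_def using B_primal[OF u0 w_pos x0 t0 cs tsU mn y0 tp _ tb Kb_def[unfolded Us_def] wm] R by simp
    define v where "v = colsum x - 1"
    define r where "r = t - uvec u x"
    define ph where "ph = ps + (1/\<xi>) *\<^sub>R v"
    define yh where "yh = ys + (1/\<xi>) *\<^sub>R r"
    have vj: "v$j = (\<Sum>i\<in>UNIV. x$i$j) - 1" for j unfolding v_def colsum_def by simp
    have rj: "r$i = t$i - util u x i" for i unfolding r_def uvec_def by simp
    have LBh: "LBr w u x t ph yh = LBr w u x t ps ys + (1/\<xi>) * (norm v)^2 + (1/\<xi>) * (norm r)^2"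
    proof -
      have a: "(\<Sum>j\<in>UNIV. ph$j * ((\<Sum>i\<in>UNIV. x$i$j) - 1)) = (\<Sum>j\<in>UNIV. ps$j * ((\<Sum>i\<in>UNIV. x$i$j) - 1)) + (1/\<xi>) * (\<Sum>j\<in>UNIV. (v$j)^2)"
        unfolding vj[symmetric] ph_def
        by (simp add: sum.distrib sum_distrib_left distrib_right power2_eq_square mult.assoc)
      have b: "(\<Sum>i\<in>UNIV. yh$i * (t$i - util u x i)) = (\<Sum>i\<in>UNIV. ys$i * (t$i - util u x i)) + (1/\<xi>) * (\<Sum>i\<in>UNIV. (r$i)^2)"
        unfolding rj[symmetric] yh_def
        by (simp add: sum.distrib sum_distrib_left distrib_right power2_eq_square mult.assoc)
      show ?thesis unfolding LBr_def norm2_vec a b by simp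
    qed
    have zhZ: "((xh, th), (ph, yh)) \<in> ZB" unfolding ZB_def using dx(1,2) by simp
    have Q: "Qgap (LB w u) z ((xh, th), (ph, yh)) = ereal (LBr w u x t ph yh - LBr w u xh th p y)"
      unfolding Qgap_def z by (simp add: LB_eq)
    have dd: "(dist ((xh, th), (ph, yh)) zs)^2 = (norm (xh - xs))^2 + (norm (th - ts))^2 + (1/\<xi>)^2 * (norm v)^2 + (1/\<xi>)^2 * (norm r)^2"
      unfolding zs dist4 ph_def yh_def using xi by (simp add: power_divide)
    define Phi where "Phi = LBr w u x t ph yh - LBr w u xh th p y - \<xi> / 2 * ((norm (xh - xs))^2 + (norm (th - ts))^2 + (1/\<xi>)^2 * (norm v)^2 + (1/\<xi>)^2 * (norm r)^2)"
    have e: "Qgap (LB w u) z ((xh, th), (ph, yh)) - ereal (\<xi> / 2 * (dist ((xh, th), (ph, yh)) zs)\<^sup>2) = ereal Phi"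
      by (simp only: Q dd Phi_def ereal_minus(1))
    have Gup: "Qgap (LB w u) z zh - ereal (\<xi> / 2 * (dist zh zs)\<^sup>2) \<le> Gsm (LB w u) ZB \<xi> z zs"
      if "zh \<in> ZB" for zh
      unfolding Gsm_def by (rule SUP_upper[OF that])
    have Gge: "ereal Phi \<le> Gsm (LB w u) ZB \<xi> z zs"
      using Gup[OF zhZ] by (simp only: e)
    have Phi_ge: "Phi \<ge> c1 * (norm (t - ts))^2 + ((norm v)^2 + (norm r)^2) / (2*\<xi>) + eta * d^2 / 2"
    proof -
      have "\<xi> / 2 * ((norm (xh - xs))^2 + (norm (th - ts))^2 + (1/\<xi>)^2 * (norm v)^2 + (1/\<xi>)^2 * (norm r)^2)
          = \<xi> / 2 * ((norm (xh - xs))^2 + (norm (th - ts))^2) + ((norm v)^2 + (norm r)^2) / (2*\<xi>)"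
        using xi by (simp add: power2_eq_square field_simps)
      moreover have "(1/\<xi>) * (norm v)^2 + (1/\<xi>) * (norm r)^2 - ((norm v)^2 + (norm r)^2) / (2*\<xi>) = ((norm v)^2 + (norm r)^2) / (2*\<xi>)"
        using xi by (simp add: field_simps)
      ultimately show ?thesis unfolding Phi_def LBh using primal dx(3) by linarith
    qed
    obtain x' where x': "\<forall>i j. 0 \<le> x'$i$j" "colsum x' = colsum xs" "uvec u x' = uvec u xs"
        "norm (x - x') \<le> H * norm (Mop u x - Mop u xs)"
      using mp[OF mp[OF H(2)[THEN spec[of _ x], THEN spec[of _ xs]] y0] x0] by blast
    have LBeq: "LB w u (x', ts) = LB w u (xs, ts)" by (rule LB_eq_transfer[OF x'(3) x'(2)])
    have c: "\<forall>z'\<in>ZB. LB w u (xs, ts) (snd z') \<le> LB w u (xs, ts) (ps, ys) \<and> LB w u (xs, ts) (ps, ys) \<le> LB w u (fst z') (ps, ys)"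
      using zsS unfolding zs saddle_points_def by simp
    have "((x', ts), (ps, ys)) \<in> ZB" using x'(1) t0 unfolding ZB_def by simp
    then have x'Z: "((x', ts), (ps, ys)) \<in> saddle_points (LB w u) ZB"
      using c unfolding saddle_points_def by (simp add: LBeq)
    have cxs: "colsum xs = 1" using cs unfolding colsum_def by (simp add: vec_eq_iff)
    have uxs: "uvec u xs = ts" using tsU unfolding uvec_def by (simp add: vec_eq_iff)
    have nM: "(norm (Mop u x - Mop u xs))^2 \<le> (norm v)^2 + 2 * (norm r)^2 + 2 * (norm (t - ts))^2"
    proof -
      have "(norm (uvec u x - ts))^2 \<le> 2 * (norm (uvec u x - t))^2 + 2 * (norm (t - ts))^2" by (rule sq_tri)
      moreover have "norm (uvec u x - t) = norm r" unfolding r_def by (rule norm_minus_commute)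
      ultimately show ?thesis unfolding norm_Mop2 v_def cxs uxs by simp
    qed
    have nx: "(norm (x - x'))^2 \<le> H^2 * ((norm v)^2 + 2 * (norm r)^2 + 2 * (norm (t - ts))^2)"
    proof -
      have "(norm (x - x'))^2 \<le> (H * norm (Mop u x - Mop u xs))^2" using x'(4) by (intro power_mono) auto
      also have "\<dots> = H^2 * (norm (Mop u x - Mop u xs))^2" by (simp add: power_mult_distrib)
      also have "\<dots> \<le> H^2 * ((norm v)^2 + 2 * (norm r)^2 + 2 * (norm (t - ts))^2)"
        using nM by (intro mult_left_mono) auto
      finally show ?thesis .
    qed
    have idist: "(infdist z (saddle_points (LB w u) ZB))^2 \<le> Hb^2 * (((norm v)^2 + (norm r)^2) + (norm (t - ts))^2) + Mt * d^2"
    proof -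
      have "infdist z (saddle_points (LB w u) ZB) \<le> dist z ((x', ts), (ps, ys))" by (rule infdist_le[OF x'Z])
      then have "(infdist z (saddle_points (LB w u) ZB))^2 \<le> (dist z ((x', ts), (ps, ys)))^2"
        by (intro power_mono infdist_nonneg)
      also have "\<dots> = (norm (x - x'))^2 + (norm (t - ts))^2 + (norm (p - ps))^2 + (norm (y - ys))^2"
        unfolding z dist4 by simp
      also have "\<dots> \<le> H^2 * ((norm v)^2 + 2 * (norm r)^2 + 2 * (norm (t - ts))^2) + (norm (t - ts))^2 + Mt * d^2"
        using nx dx(4) unfolding Mt_def Mc_def N_def by linarith
      also have "\<dots> \<le> Hb^2 * (((norm v)^2 + (norm r)^2) + (norm (t - ts))^2) + Mt * d^2"
      proof -
        have h2: "2 * H^2 + 1 \<le> Hb^2" unfolding Hb_def using H by (simp add: power2_eq_square algebra_simps)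
        define V where "V = (norm v)^2"
        define A where "A = (norm r)^2"
        define T where "T = (norm (t - ts))^2"
        have V: "V \<ge> 0" "A \<ge> 0" "T \<ge> 0" unfolding V_def A_def T_def by auto
        have "H^2 * (V + 2 * A + 2 * T) + T \<le> (2 * H^2 + 1) * (V + A + T)"
          using V by (simp add: algebra_simps)
        also have "\<dots> \<le> Hb^2 * (V + A + T)" using h2 V by (intro mult_right_mono) auto
        finally show ?thesis unfolding V_def A_def T_def by simp
      qed
      finally show ?thesis .
    qed
    have "\<alpha> * (infdist z (saddle_points (LB w u) ZB))^2 \<le> Phi"
      unfolding \<alpha>_def
      by (rule final_arith[OF Hb c1 xi eta Mt _ zero_le_power2 idist Phi_ge]) simp
    then show "Gsm (LB w u) ZB \<xi> z zs \<ge> ereal (\<alpha> * (infdist z (saddle_points (LB w u) ZB))\<^sup>2)"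
      using Gge by (meson ereal_less_eq(3) order_trans)
  qed
qed


theorem mainTheorem5:
  fixes w :: "real^'n" and u :: "real^'m^'n"
  assumes w_pos: "\<forall>i. w $ i > 0"
    and u_nonneg: "\<forall>i j. u $ i $ j \<ge> 0"
    and rows: "\<forall>i. \<exists>j. u $ i $ j > 0"
    and cols: "\<forall>j. \<exists>i. u $ i $ j > 0"
  shows "(\<forall>\<xi>>0. \<forall>S. S \<subseteq> ZA \<and> bounded S \<longrightarrow>
            (\<exists>\<alpha>>0. \<forall>zs\<in>saddle_points (LA w u) ZA. \<forall>z\<in>S.
               Gsm (LA w u) ZA \<xi> z zs \<ge> ereal (\<alpha> * (infdist z (saddle_points (LA w u) ZA))\<^sup>2)))
       \<and> (\<forall>\<xi>>0. \<forall>S. S \<subseteq> ZB \<and> bounded S \<longrightarrow>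
            (\<exists>\<alpha>>0. \<forall>zs\<in>saddle_points (LB w u) ZB. \<forall>z\<in>S.
               Gsm (LB w u) ZB \<xi> z zs \<ge> ereal (\<alpha> * (infdist z (saddle_points (LB w u) ZB))\<^sup>2)))"
  using partA[OF w_pos u_nonneg rows] partB[OF w_pos u_nonneg rows] by (rule conjI)

end
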